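(* Consider the $M_t^{B_t}/G_t/\infty$ queue described in the context, starting empty at time $0$. For each $t\ge0$ and all $\alpha,\beta,\gamma\ge0$, $$\mathbb{E}\big[e^{-\alpha W(t)-\beta Q(t)-\gamma D(t)}\big]=\exp\Big(-\int_0^t\mathcal{E}_s\Big[1-e^{-\sum_{j=1}^{B_s}\left[\beta\mathbf{1}(S_j(s)>t-s)+\gamma\mathbf{1}(S_j(s)\le t-s)+\alpha(S_j(s)-(t-s))^+\right]}\Big]\lambda(s)\,ds\Big).$$
   Context: Model ($M_t^{B_t}/G_t/\infty$ queue): batches of customers arrive at the points of a non-homogeneous Poisson process $\{A(t);t\ge0\}$ on $[0,\infty)$ with rate function $\lambda:[0,\infty)\to[0,\infty)$. A batch arriving at time $s$ has a random positive-integer size $B_s$ and its customers bring amounts of work $S_1(s),\dots,S_{B_s}(s)$, with joint law depending on $s$ (possibly dependent within a batch); different batches are independent of each other and of the arrival process. $\mathcal{E}_s$ denotes expectation with respect to the law of a batch arriving at time $s$. There are infinitely many servers, so a customer arriving at time $s$ with work $S$ departs at time $s+S$. $Q(t)$ is the number of customers in the system at time $t$, $D(t)$ the number of departures in $(0,t]$, and $W(t)$ is the workload at time $t$, i.e. the total remaining work $\sum (S-(t-s))^+$ over all customers who arrived at times $s\le t$ with work $S$. *)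

theory Defs
  imports "HOL-Probability.Probability"
begin

text \<open>Mark space of a batch: (batch size b, works S 0, S 1, ...); only S 0 .. S (b-1) matter.\<close>
definition markM :: "(nat \<times> (nat \<Rightarrow> real)) measure" where
  "markM = count_space UNIV \<Otimes>\<^sub>M PiM UNIV (\<lambda>_. borel)"

text \<open>Space of sequences of arrival epochs (ereal, with \<infinity> meaning no such arrival).\<close>
definition timesM :: "(nat \<Rightarrow> ereal) measure" where
  "timesM = PiM UNIV (\<lambda>_. borel)"

definition poisson_prob :: "real \<Rightarrow> nat \<Rightarrow> real" where
  "poisson_prob L k = exp (- L) * L ^ k / fact k"

definition arrivals :: "(nat \<Rightarrow> 'w \<Rightarrow> ereal) \<Rightarrow> 'w \<Rightarrow> real \<Rightarrow> nat set" where
  "arrivals T \<omega> t = {n. T n \<omega> \<le> ereal t}"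

definition Acount :: "(nat \<Rightarrow> 'w \<Rightarrow> ereal) \<Rightarrow> 'w \<Rightarrow> real \<Rightarrow> nat" where
  "Acount T \<omega> t = card (arrivals T \<omega> t)"

definition nhpp :: "'w measure \<Rightarrow> (real \<Rightarrow> real) \<Rightarrow> (nat \<Rightarrow> 'w \<Rightarrow> ereal) \<Rightarrow> bool" where
  "nhpp M lam T \<longleftrightarrow>
     (\<forall>s\<ge>0. 0 \<le> lam s) \<and>
     (\<forall>t\<ge>0. set_integrable lborel {0..t} lam) \<and>
     (\<forall>n. T n \<in> borel_measurable M) \<and>
     (\<forall>\<omega>\<in>space M. \<forall>n. 0 < T n \<omega>) \<and>
     (\<forall>\<omega>\<in>space M. \<forall>t. finite (arrivals T \<omega> t)) \<and>
     (\<forall>a b k. 0 \<le> a \<longrightarrow> a \<le> b \<longrightarrow>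
        measure M {\<omega>\<in>space M. Acount T \<omega> b - Acount T \<omega> a = k}
          = poisson_prob (LINT s:{a<..b}|lborel. lam s) k) \<and>
     (\<forall>(n::nat) (\<tau>::nat \<Rightarrow> real). 0 \<le> \<tau> 0 \<longrightarrow> mono \<tau> \<longrightarrow>
        prob_space.indep_vars M (\<lambda>_. count_space UNIV)
          (\<lambda>i \<omega>. Acount T \<omega> (\<tau> (Suc i)) - Acount T \<omega> (\<tau> i)) {..<n})"

definition batch_kernel :: "(real \<Rightarrow> (nat \<times> (nat \<Rightarrow> real)) measure) \<Rightarrow> bool" where
  "batch_kernel K \<longleftrightarrow> K \<in> borel \<rightarrow>\<^sub>M prob_algebra markM \<and>
     (\<forall>s\<ge>0. AE y in K s. 1 \<le> fst y \<and> (\<forall>j<fst y. 0 \<le> snd y j))"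

text \<open>Batches are independent of each other and of the arrival process, the n-th batch
  having law K (T n): joint law of (T, Y 0, ..., Y (n-1)) is that of T with conditionally
  independent marks.\<close>
definition marked_by :: "'w measure \<Rightarrow> (real \<Rightarrow> (nat \<times> (nat \<Rightarrow> real)) measure)
    \<Rightarrow> (nat \<Rightarrow> 'w \<Rightarrow> ereal) \<Rightarrow> (nat \<Rightarrow> 'w \<Rightarrow> nat \<times> (nat \<Rightarrow> real)) \<Rightarrow> bool" where
  "marked_by M K T Y \<longleftrightarrow>
     (\<forall>n. Y n \<in> M \<rightarrow>\<^sub>M markM) \<and>
     (\<forall>(n::nat) C E. C \<in> sets timesM \<longrightarrow> (\<forall>i<n. E i \<in> sets markM) \<longrightarrow>
        emeasure M {\<omega>\<in>space M. (\<lambda>k. T k \<omega>) \<in> C \<and> (\<forall>i<n. Y i \<omega> \<in> E i)}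
          = (\<integral>\<^sup>+\<omega>. indicator C (\<lambda>k. T k \<omega>) *
                 (\<Prod>i<n. emeasure (K (real_of_ereal (T i \<omega>))) (E i)) \<partial>M))"

definition Qnum :: "(nat \<Rightarrow> 'w \<Rightarrow> ereal) \<Rightarrow> (nat \<Rightarrow> 'w \<Rightarrow> nat \<times> (nat \<Rightarrow> real)) \<Rightarrow> real \<Rightarrow> 'w \<Rightarrow> nat" where
  "Qnum T Y t \<omega> = (\<Sum>n\<in>arrivals T \<omega> t.
      card {j. j < fst (Y n \<omega>) \<and> snd (Y n \<omega>) j > t - real_of_ereal (T n \<omega>)})"

definition Dnum :: "(nat \<Rightarrow> 'w \<Rightarrow> ereal) \<Rightarrow> (nat \<Rightarrow> 'w \<Rightarrow> nat \<times> (nat \<Rightarrow> real)) \<Rightarrow> real \<Rightarrow> 'w \<Rightarrow> nat" where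
  "Dnum T Y t \<omega> = (\<Sum>n\<in>arrivals T \<omega> t.
      card {j. j < fst (Y n \<omega>) \<and> snd (Y n \<omega>) j \<le> t - real_of_ereal (T n \<omega>)})"

definition Wload :: "(nat \<Rightarrow> 'w \<Rightarrow> ereal) \<Rightarrow> (nat \<Rightarrow> 'w \<Rightarrow> nat \<times> (nat \<Rightarrow> real)) \<Rightarrow> real \<Rightarrow> 'w \<Rightarrow> real" where
  "Wload T Y t \<omega> = (\<Sum>n\<in>arrivals T \<omega> t. \<Sum>j<fst (Y n \<omega>).
      max 0 (snd (Y n \<omega>) j - (t - real_of_ereal (T n \<omega>))))"

end

theory Submission
  imports Defs
begin

locale nctx = prob_space M for M :: "'w measure" +
  fixes lam :: "real \<Rightarrow> real" and T :: "nat \<Rightarrow> 'w \<Rightarrow> ereal"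
  assumes nh: "nhpp M lam T"
begin

lemma lam_nonneg: "s \<ge> 0 \<Longrightarrow> 0 \<le> lam s" using nh unfolding nhpp_def by auto
lemma lam_int: "t \<ge> 0 \<Longrightarrow> set_integrable lborel {0..t} lam" using nh unfolding nhpp_def by auto
lemma T_meas[measurable]: "T n \<in> borel_measurable M" using nh unfolding nhpp_def by auto
lemma T_pos: "\<omega> \<in> space M \<Longrightarrow> 0 < T n \<omega>" using nh unfolding nhpp_def by auto
lemma arr_fin: "\<omega> \<in> space M \<Longrightarrow> finite (arrivals T \<omega> t)" using nh unfolding nhpp_def by auto
lemma counts: "0 \<le> a \<Longrightarrow> a \<le> b \<Longrightarrow>
        measure M {\<omega>\<in>space M. Acount T \<omega> b - Acount T \<omega> a = k}
          = poisson_prob (LINT s:{a<..b}|lborel. lam s) k" using nh unfolding nhpp_def by auto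
lemma indep: "0 \<le> \<tau> 0 \<Longrightarrow> mono \<tau> \<Longrightarrow>
        indep_vars (\<lambda>_. count_space UNIV)
          (\<lambda>i \<omega>. Acount T \<omega> (\<tau> (Suc i)) - Acount T \<omega> (\<tau> i)) {..<n}"
  using nh unfolding nhpp_def by auto

lemma arr_real: "\<omega> \<in> space M \<Longrightarrow> n \<in> arrivals T \<omega> t \<Longrightarrow> T n \<omega> = ereal (real_of_ereal (T n \<omega>)) \<and> 0 < real_of_ereal (T n \<omega>) \<and> real_of_ereal (T n \<omega>) \<le> t"
proof -
  assume a: "\<omega> \<in> space M" "n \<in> arrivals T \<omega> t"
  have p: "0 < T n \<omega>" using T_pos a by auto
  have le: "T n \<omega> \<le> ereal t" using a by (auto simp: arrivals_def)
  then show ?thesis using p by (cases "T n \<omega>") auto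
qed

lemma prod_arr_eventually:
  assumes "\<omega> \<in> space M"
  shows "\<forall>\<^sub>F N in sequentially. (\<Prod>n<N. if T n \<omega> \<le> ereal t then F n else (1::'a::comm_monoid_mult)) = (\<Prod>n\<in>arrivals T \<omega> t. F n)"
proof -
  have fin: "finite (arrivals T \<omega> t)" using arr_fin assms .
  then obtain N0 where N0: "arrivals T \<omega> t \<subseteq> {..<N0}"
    by (meson finite_nat_iff_bounded)
  show ?thesis unfolding eventually_sequentially
  proof (intro exI allI impI)
    fix N assume "N0 \<le> N"
    then have e: "{n\<in>{..<N}. T n \<omega> \<le> ereal t} = arrivals T \<omega> t" using N0 by (auto simp: arrivals_def)
    show "(\<Prod>n<N. if T n \<omega> \<le> ereal t then F n else 1) = (\<Prod>n\<in>arrivals T \<omega> t. F n)"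
      by (simp only: prod.inter_filter[OF finite_lessThan, symmetric] e)
  qed
qed

lemma prod_arr_meas:
  assumes [measurable]: "\<And>n. F n \<in> borel_measurable M"
  shows "(\<lambda>\<omega>. \<Prod>n\<in>arrivals T \<omega> t. F n \<omega> :: real) \<in> borel_measurable M"
proof (rule borel_measurable_LIMSEQ_real)
  fix \<omega> assume "\<omega> \<in> space M"
  then show "(\<lambda>N. \<Prod>n<N. if T n \<omega> \<le> ereal t then F n \<omega> else 1) \<longlonglongrightarrow> (\<Prod>n\<in>arrivals T \<omega> t. F n \<omega>)"
    by (rule tendsto_eventually[OF prod_arr_eventually])
qed measurable

end

lemma poisson_pgf:
  fixes c L :: real
  shows "(\<lambda>k. c ^ k * poisson_prob L k) sums exp (- ((1 - c) * L))"
proof -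
  have "(\<lambda>k. exp (- L) * ((c * L) ^ k / fact k)) sums (exp (- L) * exp (c * L))"
    using exp_converges[of "c * L"] by (intro sums_mult) (simp add: divide_inverse mult.commute)
  moreover have "exp (- L) * exp (c * L) = exp (- ((1 - c) * L))"
    by (simp add: exp_add[symmetric] algebra_simps)
  ultimately show ?thesis
    by (simp add: poisson_prob_def power_mult_distrib mult_ac)
qed

lemma (in prob_space) expect_nat:
  fixes X :: "'a \<Rightarrow> nat" and f p :: "nat \<Rightarrow> real"
  assumes X[measurable]: "X \<in> M \<rightarrow>\<^sub>M count_space UNIV"
    and p: "\<And>k. prob {\<omega>\<in>space M. X \<omega> = k} = p k"
    and S: "(\<lambda>k. f k * p k) sums S" and f: "\<And>k. 0 \<le> f k"
  shows "has_bochner_integral M (\<lambda>\<omega>. f (X \<omega>)) S"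
proof (rule has_bochner_integral_nn_integral)
  show "(\<lambda>\<omega>. f (X \<omega>)) \<in> borel_measurable M" by measurable
  show "AE x in M. 0 \<le> f (X x)" using f by auto
  have pn: "0 \<le> f k * p k" for k using f[of k] measure_nonneg[of M] p[of k] by (metis mult_nonneg_nonneg)
  have Sn: "0 \<le> S" by (rule sums_le[OF _ sums_zero S]) (use pn in auto)
  then show "0 \<le> S" .
  have pt: "ennreal (f (X \<omega>)) = (\<Sum>k. ennreal (f k) * indicator {\<omega>\<in>space M. X \<omega> = k} \<omega>)"
    if "\<omega> \<in> space M" for \<omega>
    using that by (subst suminf_finite[of "{X \<omega>}"]) (auto simp: indicator_def)
  have "(\<integral>\<^sup>+\<omega>. ennreal (f (X \<omega>)) \<partial>M) = (\<integral>\<^sup>+\<omega>. (\<Sum>k. ennreal (f k) * indicator {\<omega>\<in>space M. X \<omega> = k} \<omega>) \<partial>M)"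
    by (rule nn_integral_cong) (simp add: pt)
  also have "\<dots> = (\<Sum>k. \<integral>\<^sup>+\<omega>. ennreal (f k) * indicator {\<omega>\<in>space M. X \<omega> = k} \<omega> \<partial>M)"
    by (rule nn_integral_suminf) measurable
  also have "\<dots> = (\<Sum>k. ennreal (f k * p k))"
    by (simp add: nn_integral_cmult emeasure_eq_measure p ennreal_mult' f)
  also have "\<dots> = ennreal S"
    by (rule suminf_ennreal_eq[OF pn S])
  finally show "(\<integral>\<^sup>+\<omega>. ennreal (f (X \<omega>)) \<partial>M) = ennreal S" .
qed

context nctx begin

definition PiG :: "real \<Rightarrow> (real \<Rightarrow> real) \<Rightarrow> 'w \<Rightarrow> real" where
  "PiG t g \<omega> = (\<Prod>n\<in>arrivals T \<omega> t. g (real_of_ereal (T n \<omega>)))"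

definition Hgood :: "real \<Rightarrow> (real \<Rightarrow> real) \<Rightarrow> bool" where
  "Hgood t g \<longleftrightarrow> g \<in> borel_measurable borel \<and> (\<forall>s. 0 \<le> g s \<and> g s \<le> 1) \<and>
     expectation (PiG t g) = exp (- (LINT s:{0..t}|lborel. (1 - g s) * lam s))"

lemma PiG_meas[measurable]: assumes [measurable]: "g \<in> borel_measurable borel" shows "PiG t g \<in> borel_measurable M"
  unfolding PiG_def by (rule prod_arr_meas) measurable

lemma PiG_bounds: "(\<And>s. 0 \<le> g s \<and> g s \<le> 1) \<Longrightarrow> 0 \<le> PiG t g \<omega> \<and> PiG t g \<omega> \<le> 1"
  unfolding PiG_def by (auto intro!: prod_nonneg prod_le_1)

lemma arr_mono: "a \<le> b \<Longrightarrow> arrivals T \<omega> a \<subseteq> arrivals T \<omega> b"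
  unfolding arrivals_def by (auto intro: order_trans)

lemma card_cell:
  assumes w: "\<omega> \<in> space M" and ab: "0 \<le> a" "a \<le> b" "b \<le> t"
  shows "card {n\<in>arrivals T \<omega> t. a < real_of_ereal (T n \<omega>) \<and> real_of_ereal (T n \<omega>) \<le> b}
       = Acount T \<omega> b - Acount T \<omega> a"
proof -
  have "{n\<in>arrivals T \<omega> t. a < real_of_ereal (T n \<omega>) \<and> real_of_ereal (T n \<omega>) \<le> b}
      = arrivals T \<omega> b - arrivals T \<omega> a"
  proof (intro set_eqI iffI)
    fix n assume n: "n \<in> {n\<in>arrivals T \<omega> t. a < real_of_ereal (T n \<omega>) \<and> real_of_ereal (T n \<omega>) \<le> b}"
    then have "T n \<omega> = ereal (real_of_ereal (T n \<omega>))" using arr_real[OF w] by blast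
    then show "n \<in> arrivals T \<omega> b - arrivals T \<omega> a" using n unfolding arrivals_def
      by (metis (mono_tags, lifting) Diff_iff ereal_less_eq(3) linorder_not_le mem_Collect_eq)
  next
    fix n assume n: "n \<in> arrivals T \<omega> b - arrivals T \<omega> a"
    have p: "0 < T n \<omega>" using T_pos[OF w] .
    have "T n \<omega> \<le> ereal b" "\<not> T n \<omega> \<le> ereal a" using n unfolding arrivals_def by auto
    with p ab show "n \<in> {n\<in>arrivals T \<omega> t. a < real_of_ereal (T n \<omega>) \<and> real_of_ereal (T n \<omega>) \<le> b}"
      unfolding arrivals_def by (cases "T n \<omega>") auto
  qed
  then show ?thesis unfolding Acount_def
    using arr_mono[OF ab(2), of \<omega>] arr_fin[OF w, of a] by (simp add: card_Diff_subset)
qed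

lemma step_good:
  fixes t :: real and m :: nat and c :: "nat \<Rightarrow> real"
  assumes t: "0 < t" and m: "0 < m" and c: "\<And>i. 0 \<le> c i \<and> c i \<le> 1"
  shows "Hgood t (\<lambda>s. \<Prod>i<m. if real i * t / real m < s \<and> s \<le> real (Suc i) * t / real m then c i else 1)"
proof -
  define \<tau> where "\<tau> i = real i * t / real m" for i
  define h where "h s = (\<Prod>i<m. if \<tau> i < s \<and> s \<le> \<tau> (Suc i) then c i else 1)" for s
  define X where "X i \<omega> = Acount T \<omega> (\<tau> (Suc i)) - Acount T \<omega> (\<tau> i)" for i \<omega>
  define L where "L i = (LINT s:{\<tau> i<..\<tau> (Suc i)}|lborel. lam s)" for i
  have \<tau>0: "\<tau> 0 = 0" by (simp add: \<tau>_def)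
  have \<tau>mono: "mono \<tau>" unfolding mono_def \<tau>_def using t m
    by (auto intro!: divide_right_mono mult_right_mono)
  have \<tau>nn: "0 \<le> \<tau> i" for i using t by (simp add: \<tau>_def)
  have \<tau>le: "i \<le> m \<Longrightarrow> \<tau> i \<le> t" for i using t m by (simp add: \<tau>_def field_simps)
  have hmeas: "h \<in> borel_measurable borel" unfolding h_def by measurable
  have hb: "0 \<le> h s \<and> h s \<le> 1" for s unfolding h_def using c by (auto intro!: prod_nonneg prod_le_1)
  have pw: "PiG t h \<omega> = (\<Prod>i<m. c i ^ X i \<omega>)" if w: "\<omega> \<in> space M" for \<omega>
  proof -
    have "PiG t h \<omega> = (\<Prod>i<m. \<Prod>n\<in>arrivals T \<omega> t. if \<tau> i < real_of_ereal (T n \<omega>) \<and> real_of_ereal (T n \<omega>) \<le> \<tau> (Suc i) then c i else 1)"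
      unfolding PiG_def h_def by (rule prod.swap)
    also have "\<dots> = (\<Prod>i<m. c i ^ card {n\<in>arrivals T \<omega> t. \<tau> i < real_of_ereal (T n \<omega>) \<and> real_of_ereal (T n \<omega>) \<le> \<tau> (Suc i)})"
      by (intro prod.cong refl) (simp add: prod.inter_filter[OF arr_fin[OF w], symmetric])
    also have "\<dots> = (\<Prod>i<m. c i ^ X i \<omega>)"
      by (intro prod.cong refl) (simp add: X_def card_cell[OF w \<tau>nn monoD[OF \<tau>mono] \<tau>le])
    finally show ?thesis .
  qed
  have ind: "indep_vars (\<lambda>_. count_space UNIV) X {..<m}"
    unfolding X_def by (rule indep) (simp_all add: \<tau>0 \<tau>mono)
  have Xmeas[measurable]: "X i \<in> M \<rightarrow>\<^sub>M count_space UNIV" if "i < m" for i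
    using ind that unfolding indep_vars_def by auto
  have single: "has_bochner_integral M (\<lambda>\<omega>. c i ^ X i \<omega>) (exp (- ((1 - c i) * L i)))" if "i < m" for i
  proof (rule expect_nat[OF Xmeas[OF that]])
    show "prob {\<omega> \<in> space M. X i \<omega> = k} = poisson_prob (L i) k" for k
      unfolding X_def L_def by (rule counts) (simp_all add: \<tau>nn monoD[OF \<tau>mono])
    show "(\<lambda>k. c i ^ k * poisson_prob (L i) k) sums exp (- ((1 - c i) * L i))" by (rule poisson_pgf)
    show "0 \<le> c i ^ k" for k using c by simp
  qed
  have "expectation (PiG t h) = expectation (\<lambda>\<omega>. \<Prod>i<m. c i ^ X i \<omega>)"
    by (intro Bochner_Integration.integral_cong refl) (simp add: pw)
  also have "\<dots> = (\<Prod>i<m. expectation (\<lambda>\<omega>. c i ^ X i \<omega>))"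
  proof (rule indep_vars_lebesgue_integral)
    show "indep_vars (\<lambda>_. borel) (\<lambda>i \<omega>. c i ^ X i \<omega>) {..<m}"
      by (rule indep_vars_compose2[OF ind, where Y="\<lambda>i k. c i ^ k"]) simp
    show "integrable M (\<lambda>\<omega>. c i ^ X i \<omega>)" if "i \<in> {..<m}" for i
      using single[of i] that by (simp add: has_bochner_integral_iff)
  qed simp
  also have "\<dots> = (\<Prod>i<m. exp (- ((1 - c i) * L i)))"
    by (intro prod.cong refl) (use single in \<open>auto intro: has_bochner_integral_integral_eq\<close>)
  also have "\<dots> = exp (- (\<Sum>i<m. (1 - c i) * L i))"
    by (simp add: exp_sum[symmetric] sum_negf)
  finally have lhs: "expectation (PiG t h) = exp (- (\<Sum>i<m. (1 - c i) * L i))" .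
  have cellc: "(\<tau> i < s \<and> s \<le> \<tau> (Suc i)) \<longleftrightarrow> i = nat \<lceil>s * m / t\<rceil> - 1" if s: "0 < s" for i s
  proof -
    have "(\<tau> i < s \<and> s \<le> \<tau> (Suc i)) \<longleftrightarrow> (real i < s * m / t \<and> s * m / t \<le> real i + 1)"
      using t m by (simp add: \<tau>_def field_simps)
    also have "\<dots> \<longleftrightarrow> \<lceil>s * m / t\<rceil> = int i + 1"
      by (simp add: ceiling_eq_iff)
    also have "\<dots> \<longleftrightarrow> i = nat \<lceil>s * m / t\<rceil> - 1"
    proof -
      have "0 < s * m / t" using s t m by simp
      then have "1 \<le> \<lceil>s * m / t\<rceil>" by linarith
      then show ?thesis by linarith
    qed
    finally show ?thesis .
  qed
  have pt: "indicator {0..t} s * ((1 - h s) * lam s) = (\<Sum>i<m. (1 - c i) * (indicator {\<tau> i<..\<tau> (Suc i)} s * lam s))" for s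
  proof (cases "0 < s \<and> s \<le> t")
    case True
    define i0 where "i0 = nat \<lceil>s * m / t\<rceil> - 1"
    have i0m: "i0 < m"
    proof -
      have "s * m / t \<le> m" using True t m by (simp add: field_simps)
      then have "\<lceil>s * m / t\<rceil> \<le> int m" by (simp add: ceiling_le_iff)
      then show ?thesis unfolding i0_def using m by linarith
    qed
    have cc: "(\<tau> i < s \<and> s \<le> \<tau> (Suc i)) \<longleftrightarrow> i = i0" for i
      using cellc[OF conjunct1[OF True]] unfolding i0_def .
    have hs: "h s = c i0" unfolding h_def cc using i0m by simp
    have "(\<Sum>i<m. (1 - c i) * (indicator {\<tau> i<..\<tau> (Suc i)} s * lam s)) = (1 - c i0) * lam s"
    proof -
      have "(\<Sum>i<m. (1 - c i) * (indicator {\<tau> i<..\<tau> (Suc i)} s * lam s)) = (\<Sum>i<m. if i = i0 then (1 - c i) * lam s else 0)"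
        by (intro sum.cong refl) (auto simp: indicator_def cc)
      then show ?thesis using i0m by simp
    qed
    then show ?thesis using True hs by simp
  next
    case False
    have "indicator {\<tau> i<..\<tau> (Suc i)} s = (0::real)" if "i < m" for i
      using False \<tau>nn[of i] \<tau>le[of "Suc i"] that by (auto simp: indicator_def)
    moreover have "indicator {0..t} s * ((1 - h s) * lam s) = 0"
    proof (cases "s = 0")
      case True
      then have "h s = 1" unfolding h_def using \<tau>nn by (auto intro!: prod.neutral simp: not_less[symmetric])
      then show ?thesis by simp
    qed (use False in \<open>auto simp: indicator_def\<close>)
    ultimately show ?thesis by simp
  qed
  have intc: "integrable lborel (\<lambda>s. indicator {\<tau> i<..\<tau> (Suc i)} s * lam s)" for i
  proof -
    have "set_integrable lborel {\<tau> i<..\<tau> (Suc i)} lam"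
      by (rule set_integrable_subset[OF lam_int[of "\<tau> (Suc i)"]]) (use \<tau>nn[of i] \<tau>nn[of "Suc i"] in auto)
    then show ?thesis by (simp add: set_integrable_def)
  qed
  have "(LINT s:{0..t}|lborel. (1 - h s) * lam s) = (\<integral>s. (\<Sum>i<m. (1 - c i) * (indicator {\<tau> i<..\<tau> (Suc i)} s * lam s)) \<partial>lborel)"
    unfolding set_lebesgue_integral_def by (simp add: pt)
  also have "\<dots> = (\<Sum>i<m. (1 - c i) * L i)"
    by (subst Bochner_Integration.integral_sum) (auto simp: intc L_def set_lebesgue_integral_def)
  finally have rhs: "(LINT s:{0..t}|lborel. (1 - h s) * lam s) = (\<Sum>i<m. (1 - c i) * L i)" .
  show ?thesis unfolding Hgood_def h_def[symmetric] \<tau>_def[symmetric]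
    using hmeas hb lhs rhs by simp
qed

end

lemma grid_cell:
  fixes t s :: real and m :: nat
  assumes t: "0 < t" and m: "0 < m" and s: "0 < s" "s \<le> t"
  shows "nat \<lceil>s * m / t\<rceil> - 1 < m \<and> 1 \<le> \<lceil>s * m / t\<rceil> \<and>
    (\<forall>i. (real i * t / real m < s \<and> s \<le> real (Suc i) * t / real m) \<longleftrightarrow> i = nat \<lceil>s * m / t\<rceil> - 1)"
proof -
  define i0 where "i0 = nat \<lceil>s * m / t\<rceil> - 1"
  have "0 < s * m / t" using s t m by simp
  then have c1: "1 \<le> \<lceil>s * m / t\<rceil>" by linarith
  have "s * m / t \<le> m" using s t m by (simp add: field_simps)
  then have "\<lceil>s * m / t\<rceil> \<le> int m" by (simp add: ceiling_le_iff)
  then have i0m: "i0 < m" unfolding i0_def using m c1 by linarith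
  have "(real i * t / real m < s \<and> s \<le> real (Suc i) * t / real m) \<longleftrightarrow> i = i0" for i
  proof -
    have "(real i * t / real m < s \<and> s \<le> real (Suc i) * t / real m) \<longleftrightarrow> (real i < s * m / t \<and> s * m / t \<le> real i + 1)"
      using t m by (simp add: field_simps)
    also have "\<dots> \<longleftrightarrow> \<lceil>s * m / t\<rceil> = int i + 1"
      by (simp add: ceiling_eq_iff)
    also have "\<dots> \<longleftrightarrow> i = i0" unfolding i0_def using c1 by linarith
    finally show ?thesis .
  qed
  then show ?thesis using i0m c1 unfolding i0_def by blast
qed

context nctx begin

lemma good_limit:
  fixes t :: real and G :: "nat \<Rightarrow> real \<Rightarrow> real" and g :: "real \<Rightarrow> real"
  assumes t: "0 \<le> t" and G: "\<And>k. Hgood t (G k)"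
    and gm[measurable]: "g \<in> borel_measurable borel" and gb: "\<And>s. 0 \<le> g s \<and> g s \<le> 1"
    and conv: "\<And>s. 0 < s \<Longrightarrow> s \<le> t \<Longrightarrow> (\<lambda>k. G k s) \<longlonglongrightarrow> g s"
  shows "Hgood t g"
proof -
  have Gm[measurable]: "G k \<in> borel_measurable borel" for k using G[of k] unfolding Hgood_def by auto
  have Gb: "0 \<le> G k s \<and> G k s \<le> 1" for k s using G[of k] unfolding Hgood_def by auto
  have Ge: "expectation (PiG t (G k)) = exp (- (LINT s:{0..t}|lborel. (1 - G k s) * lam s))" for k
    using G[of k] unfolding Hgood_def by auto
  have L1: "(\<lambda>k. expectation (PiG t (G k))) \<longlonglongrightarrow> expectation (PiG t g)"
  proof (rule integral_dominated_convergence[where w="\<lambda>_. 1"])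
    show "AE x in M. (\<lambda>k. PiG t (G k) x) \<longlonglongrightarrow> PiG t g x"
    proof (rule AE_I2)
      fix \<omega> assume w: "\<omega> \<in> space M"
      show "(\<lambda>k. PiG t (G k) \<omega>) \<longlonglongrightarrow> PiG t g \<omega>" unfolding PiG_def
        by (intro tendsto_prod conv) (use arr_real[OF w] in auto)
    qed
    show "AE x in M. norm (PiG t (G k) x) \<le> 1" for k
      using PiG_bounds[of "G k" t] Gb by auto
  qed auto
  have L2: "(\<lambda>k. (LINT s:{0..t}|lborel. (1 - G k s) * lam s)) \<longlonglongrightarrow> (LINT s:{0..t}|lborel. (1 - g s) * lam s)"
    unfolding set_lebesgue_integral_def
  proof (rule integral_dominated_convergence[where w="\<lambda>s. indicator {0..t} s * lam s"])
    show "integrable lborel (\<lambda>s. indicator {0..t} s * lam s)"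
      using lam_int[OF t] by (simp add: set_integrable_def)
    have lm: "(\<lambda>s. indicator {0..t} s * lam s) \<in> borel_measurable borel"
      using lam_int[OF t] unfolding set_integrable_def by (auto dest: borel_measurable_integrable)
    have eqf: "(\<lambda>s. indicator {0..t} s *\<^sub>R ((1 - f s) * lam s)) = (\<lambda>s. (1 - f s) * (indicator {0..t} s * lam s))" for f :: "real \<Rightarrow> real"
      by (auto simp: fun_eq_iff)
    show "(\<lambda>s. indicator {0..t} s *\<^sub>R ((1 - g s) * lam s)) \<in> borel_measurable lborel"
      unfolding eqf measurable_lborel2 by (intro borel_measurable_times lm) measurable
    show "(\<lambda>s. indicator {0..t} s *\<^sub>R ((1 - G k s) * lam s)) \<in> borel_measurable lborel" for k
      unfolding eqf measurable_lborel2 by (intro borel_measurable_times lm) measurable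
    show "AE s in lborel. (\<lambda>k. indicator {0..t} s *\<^sub>R ((1 - G k s) * lam s)) \<longlonglongrightarrow> indicator {0..t} s *\<^sub>R ((1 - g s) * lam s)"
      using AE_lborel_singleton[of 0]
    proof (rule AE_mp, intro AE_I2 impI)
      fix s :: real assume "s \<noteq> 0"
      then show "(\<lambda>k. indicator {0..t} s *\<^sub>R ((1 - G k s) * lam s)) \<longlonglongrightarrow> indicator {0..t} s *\<^sub>R ((1 - g s) * lam s)"
        by (cases "s \<in> {0..t}") (auto intro!: tendsto_intros conv)
    qed
    show "AE s in lborel. norm (indicator {0..t} s *\<^sub>R ((1 - G k s) * lam s)) \<le> indicator {0..t} s * lam s" for k
    proof (rule AE_I2)
      fix s :: real
      show "norm (indicator {0..t} s *\<^sub>R ((1 - G k s) * lam s)) \<le> indicator {0..t} s * lam s"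
      proof (cases "s \<in> {0..t}")
        case True
        then have "0 \<le> lam s" using lam_nonneg by auto
        moreover have "\<bar>1 - G k s\<bar> \<le> 1" using Gb[of k s] by auto
        ultimately show ?thesis using True by (simp add: abs_mult mult_left_le_one_le)
      qed simp
    qed
  qed
  have L3: "(\<lambda>k. expectation (PiG t (G k))) \<longlonglongrightarrow> exp (- (LINT s:{0..t}|lborel. (1 - g s) * lam s))"
    unfolding Ge by (intro tendsto_intros L2)
  show ?thesis unfolding Hgood_def using gm gb LIMSEQ_unique[OF L1 L3] by auto
qed

lemma cont_good:
  fixes t :: real and h :: "real \<Rightarrow> real"
  assumes t: "0 < t" and hc: "continuous_on UNIV h" and hb: "\<And>s. 0 \<le> h s \<and> h s \<le> 1"
  shows "Hgood t h"
proof (rule good_limit)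
  define G where "G k s = (\<Prod>i<Suc k. if real i * t / real (Suc k) < s \<and> s \<le> real (Suc i) * t / real (Suc k)
       then h (real (Suc i) * t / real (Suc k)) else 1)" for k s
  show "Hgood t (G k)" for k unfolding G_def by (rule step_good) (use t hb in auto)
  show "0 \<le> t" using t by simp
  show "h \<in> borel_measurable borel" using hc by (rule borel_measurable_continuous_onI)
  show "0 \<le> h s \<and> h s \<le> 1" for s by (rule hb)
  fix s :: real assume s: "0 < s" "s \<le> t"
  define i0 where "i0 k = nat \<lceil>s * real (Suc k) / t\<rceil> - 1" for k
  define u where "u k = real (Suc (i0 k)) * t / real (Suc k)" for k
  have Gu: "G k s = h (u k) \<and> s \<le> u k \<and> u k < s + t / real (Suc k)" for k
  proof -
    have gc: "i0 k < Suc k" "\<And>i. (real i * t / real (Suc k) < s \<and> s \<le> real (Suc i) * t / real (Suc k)) \<longleftrightarrow> i = i0 k"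
      using grid_cell[OF t _ s, of "Suc k"] unfolding i0_def by auto
    have uk: "u k = real (Suc (i0 k)) * t / real (Suc k)" by (simp add: u_def)
    have "G k s = (\<Prod>i<Suc k. if i = i0 k then h (real (Suc i) * t / real (Suc k)) else 1)"
      unfolding G_def by (intro prod.cong refl) (simp only: gc(2))
    also have "\<dots> = h (u k)" using gc(1) uk by simp
    finally have 1: "G k s = h (u k)" .
    have a: "real (i0 k) * t / real (Suc k) < s" "s \<le> real (Suc (i0 k)) * t / real (Suc k)" using gc(2)[of "i0 k"] by auto
    have "real (Suc (i0 k)) * t / real (Suc k) = real (i0 k) * t / real (Suc k) + t / real (Suc k)"
      by (simp only: of_nat_Suc distrib_right add_divide_distrib mult_1)
    then show ?thesis using 1 a uk by simp
  qed
  have "u \<longlonglongrightarrow> s"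
  proof (rule tendsto_sandwich[where f="\<lambda>_. s" and h="\<lambda>k. s + t / real (Suc k)"])
    show "\<forall>\<^sub>F n in sequentially. s \<le> u n" using Gu by auto
    show "\<forall>\<^sub>F n in sequentially. u n \<le> s + t / real (Suc n)"
      by (rule always_eventually) (use Gu less_imp_le in blast)
    have "(\<lambda>k. t / real (Suc k)) \<longlonglongrightarrow> 0"
      using tendsto_mult[OF tendsto_const[of t] LIMSEQ_inverse_real_of_nat] by (simp add: divide_inverse)
    then show "(\<lambda>k. s + t / real (Suc k)) \<longlonglongrightarrow> s" using tendsto_add[OF tendsto_const[of s]] by fastforce
  qed simp
  moreover have "isCont h s" using hc by (simp add: continuous_on_eq_continuous_at)
  ultimately have "(\<lambda>k. h (u k)) \<longlonglongrightarrow> h s" by (rule isCont_tendsto_compose[rotated])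
  then show "(\<lambda>k. G k s) \<longlonglongrightarrow> h s" using Gu by simp
qed

lemma zero_good:
  assumes gm: "g \<in> borel_measurable borel" and gb: "\<And>s. 0 \<le> g s \<and> g s \<le> 1"
  shows "Hgood 0 g"
proof -
  have "arrivals T \<omega> 0 = {}" if "\<omega> \<in> space M" for \<omega>
    using T_pos[OF that] unfolding arrivals_def by (auto simp: not_le[symmetric] zero_ereal_def)
  then have "expectation (PiG 0 g) = expectation (\<lambda>_. 1)"
    by (intro Bochner_Integration.integral_cong refl) (simp add: PiG_def)
  also have "\<dots> = 1" by (simp add: prob_space)
  finally have 1: "expectation (PiG 0 g) = 1" .
  have "(LINT s:{0..0}|lborel. (1 - g s) * lam s) = 0"
    unfolding set_lebesgue_integral_def
    by (rule integral_eq_zero_AE, rule AE_mp[OF AE_lborel_singleton[of 0]]) (auto intro!: AE_I2 simp: indicator_def)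
  then show ?thesis unfolding Hgood_def using gm gb 1 by simp
qed

end

inductive baire :: "(real \<Rightarrow> real) \<Rightarrow> bool" where
  baire_cont: "continuous_on UNIV f \<Longrightarrow> baire f"
| baire_lim: "(\<And>k. baire (F k)) \<Longrightarrow> (\<And>x. (\<lambda>k. F k x) \<longlonglongrightarrow> f x) \<Longrightarrow> baire f"

lemma baire_op2_aux:
  fixes op :: "real \<Rightarrow> real \<Rightarrow> real"
  assumes contop: "\<And>f g :: real \<Rightarrow> real. continuous_on UNIV f \<Longrightarrow> continuous_on UNIV g \<Longrightarrow> continuous_on UNIV (\<lambda>x. op (f x) (g x))"
    and limop: "\<And>(A :: nat \<Rightarrow> real) B a b. A \<longlonglongrightarrow> a \<Longrightarrow> B \<longlonglongrightarrow> b \<Longrightarrow> (\<lambda>k. op (A k) (B k)) \<longlonglongrightarrow> op a b"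
    and f: "baire f" and g: "continuous_on UNIV g"
  shows "baire (\<lambda>x. op (f x) (g x))"
  using f
proof induct
  case (baire_cont f0)
  show ?case by (rule baire.baire_cont, rule contop[OF baire_cont g])
next
  case (baire_lim F f)
  show ?case
    by (rule baire.baire_lim[where F="\<lambda>k x. op (F k x) (g x)"]) (auto intro: baire_lim limop)
qed

lemma baire_op2:
  fixes op :: "real \<Rightarrow> real \<Rightarrow> real"
  assumes contop: "\<And>f g :: real \<Rightarrow> real. continuous_on UNIV f \<Longrightarrow> continuous_on UNIV g \<Longrightarrow> continuous_on UNIV (\<lambda>x. op (f x) (g x))"
    and limop: "\<And>(A :: nat \<Rightarrow> real) B a b. A \<longlonglongrightarrow> a \<Longrightarrow> B \<longlonglongrightarrow> b \<Longrightarrow> (\<lambda>k. op (A k) (B k)) \<longlonglongrightarrow> op a b"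
    and f: "baire f" and g: "baire g"
  shows "baire (\<lambda>x. op (f x) (g x))"
  using g
proof induct
  case (baire_cont g0)
  show ?case by (rule baire_op2_aux) (use contop limop f baire_cont in auto)
next
  case (baire_lim G g)
  show ?case
    by (rule baire.baire_lim[where F="\<lambda>k x. op (f x) (G k x)"]) (auto intro: baire_lim limop)
qed

lemma baire_add: "baire f \<Longrightarrow> baire g \<Longrightarrow> baire (\<lambda>x. f x + g x)"
  by (rule baire_op2[where op="(+)"]) (auto intro: continuous_intros tendsto_intros)

lemma baire_max: "baire f \<Longrightarrow> baire g \<Longrightarrow> baire (\<lambda>x. max (f x) (g x))"
  by (rule baire_op2[where op="max"]) (auto intro: continuous_intros tendsto_intros)

lemma baire_cmult: "baire f \<Longrightarrow> baire (\<lambda>x. c * f x)"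
proof -
  assume f: "baire f"
  have "baire (\<lambda>x. (\<lambda>a b. c * a) (f x) (f x))"
    by (rule baire_op2[OF _ _ f f]) (auto intro: continuous_intros tendsto_intros)
  then show ?thesis by simp
qed

lemma baire_1minus: "baire f \<Longrightarrow> baire (\<lambda>x. 1 - f x)"
proof -
  assume f: "baire f"
  have "baire (\<lambda>x. (\<lambda>a b. 1 - a) (f x) (f x))"
    by (rule baire_op2[OF _ _ f f]) (auto intro: continuous_intros tendsto_intros)
  then show ?thesis by simp
qed

lemma baire_const: "baire (\<lambda>x. c)"
  by (rule baire_cont) (rule continuous_on_const)

lemma baire_sum: "finite I \<Longrightarrow> (\<And>i. i \<in> I \<Longrightarrow> baire (f i)) \<Longrightarrow> baire (\<lambda>x. \<Sum>i\<in>I. f i x)"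
  by (induct I rule: finite_induct) (auto intro: baire_add baire_const)

lemma baire_meas: "baire f \<Longrightarrow> f \<in> borel_measurable borel"
proof (induct rule: baire.induct)
  case (baire_cont f)
  then show ?case by (rule borel_measurable_continuous_onI)
next
  case (baire_lim F f)
  show ?case by (rule borel_measurable_LIMSEQ_real[where u=F]) (use baire_lim in auto)
qed

lemma baire_ioo: "baire (indicator {a<..<b})"
proof (rule baire_lim)
  define F where "F k x = min 1 (real k * max 0 (min (x - a) (b - x)))" for k x
  show "baire (F k)" for k unfolding F_def by (intro baire_cont continuous_intros)
  fix x :: real
  show "(\<lambda>k. F k x) \<longlonglongrightarrow> indicator {a<..<b} x"
  proof (cases "a < x \<and> x < b")
    case True
    then have d: "0 < min (x - a) (b - x)" by simp
    obtain n where n: "1 < real n * min (x - a) (b - x)" using ex_less_of_nat_mult[OF d] by blast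
    have "\<forall>\<^sub>F k in sequentially. F k x = 1"
      unfolding eventually_sequentially
    proof (intro exI allI impI)
      fix k assume "n \<le> k"
      then have "real n * min (x - a) (b - x) \<le> real k * min (x - a) (b - x)"
        using d by (intro mult_right_mono) auto
      then have "1 \<le> real k * min (x - a) (b - x)" using n by linarith
      then show "F k x = 1" unfolding F_def using d by simp
    qed
    then show ?thesis using True by (simp add: tendsto_eventually)
  next
    case False
    then have "F k x = 0" for k unfolding F_def by auto
    then show ?thesis using False by simp
  qed
qed

lemma baire_finite_union:
  fixes A :: "nat \<Rightarrow> real set" and n :: nat
  assumes "\<And>i. baire (indicator (A i))" shows "baire (indicator (\<Union>i<n. A i) :: real \<Rightarrow> real)"
proof (induct n)
  case 0
  then show ?case using baire_const[of 0] by simp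
next
  case (Suc n)
  have "indicator (\<Union>i<Suc n. A i) = (\<lambda>x. max (indicator (\<Union>i<n. A i) x) (indicator (A n) x) :: real)"
    by (auto simp: fun_eq_iff indicator_def lessThan_Suc)
  then show ?case using Suc assms by (simp add: baire_max)
qed

lemma baire_sets: "A \<in> sets borel \<Longrightarrow> baire (indicator A)"
proof -
  assume "A \<in> sets borel"
  moreover have "sets borel = sigma_sets UNIV (range (\<lambda>(a, b). box a (b::real)))"
    unfolding borel_eq_box[where 'a=real] by (subst sets_measure_of) auto
  ultimately have "A \<in> sigma_sets UNIV (range (\<lambda>(a, b). box a (b::real)))" by simp
  then show "baire (indicator A)"
  proof (induct rule: sigma_sets.induct)
    case (Basic a)
    then show ?case by (auto simp: baire_ioo)
  next
    case Empty
    then show ?case using baire_const[of 0] by simp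
  next
    case (Compl a)
    have "indicator (UNIV - a) = (\<lambda>x. 1 - indicator a x :: real)" by (auto simp: fun_eq_iff indicator_def)
    then show ?case using baire_1minus[OF Compl(2)] by simp
  next
    case (Union A)
    show ?case
    proof (rule baire_lim[where F="\<lambda>n. indicator (\<Union>i<n. A i)"])
      show "baire (indicator (\<Union>i<n. A i))" for n by (rule baire_finite_union) (use Union in auto)
      fix x
      show "(\<lambda>n. indicator (\<Union>i<n. A i) x :: real) \<longlonglongrightarrow> indicator (\<Union>i. A i) x"
      proof (cases "x \<in> (\<Union>i. A i)")
        case True
        then obtain i where i: "x \<in> A i" by auto
        have "\<forall>\<^sub>F n in sequentially. indicator (\<Union>i<n. A i) x = (1::real)"
          unfolding eventually_sequentially using i by (intro exI[of _ "Suc i"]) (auto simp: indicator_def)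
        then show ?thesis using True by (simp add: tendsto_eventually)
      next
        case False
        then show ?thesis by (simp add: indicator_def)
      qed
    qed
  qed
qed

lemma baire_simple: "simple_function borel f \<Longrightarrow> baire f"
proof -
  assume sf: "simple_function borel f"
  have fin: "finite (f ` UNIV)" using simple_functionD(1)[OF sf] by simp
  have "f = (\<lambda>x. \<Sum>y\<in>f ` UNIV. y * indicator (f -` {y}) x)"
  proof
    fix x
    have "(\<Sum>y\<in>f ` UNIV. y * indicator (f -` {y}) x) = (\<Sum>y\<in>f ` UNIV. if y = f x then y else 0)"
      by (intro sum.cong refl) (auto simp: indicator_def)
    also have "\<dots> = f x" using fin by simp
    finally show "f x = (\<Sum>y\<in>f ` UNIV. y * indicator (f -` {y}) x)" by simp
  qed
  moreover have "baire (\<lambda>x. \<Sum>y\<in>f ` UNIV. y * indicator (f -` {y}) x)"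
  proof (rule baire_sum[OF fin])
    fix y
    have "f -` {y} \<in> sets borel" using simple_functionD(2)[OF sf, of "{y}"] by simp
    then show "baire (\<lambda>x. y * indicator (f -` {y}) x)" by (intro baire_cmult baire_sets)
  qed
  ultimately show "baire f" by simp
qed

lemma baire_borel: "f \<in> borel_measurable borel \<Longrightarrow> baire f"
proof -
  assume "f \<in> borel_measurable borel"
  from borel_measurable_implies_sequence_metric[OF this, of 0]
  obtain F where F: "\<And>i. simple_function borel (F i)" "\<And>x. (\<lambda>i. F i x) \<longlonglongrightarrow> f x" by auto
  show "baire f" by (rule baire_lim[where F=F]) (auto intro: baire_simple F)
qed

definition clip :: "real \<Rightarrow> real" where "clip y = max 0 (min 1 y)"

context nctx begin

lemma baire_good: assumes t: "0 < t" shows "baire f \<Longrightarrow> Hgood t (\<lambda>x. clip (f x))"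
proof (induct rule: baire.induct)
  case (baire_cont f)
  show ?case unfolding clip_def
    by (rule cont_good[OF t]) (auto intro!: continuous_intros baire_cont)
next
  case (baire_lim F f)
  have "baire f" by (rule baire.baire_lim) (use baire_lim in auto)
  then have [measurable]: "f \<in> borel_measurable borel" by (rule baire_meas)
  show ?case
  proof (rule good_limit[where G="\<lambda>k x. clip (F k x)"])
    show "Hgood t (\<lambda>x. clip (F k x))" for k using baire_lim by auto
    show "(\<lambda>x. clip (f x)) \<in> borel_measurable borel" unfolding clip_def by measurable
    show "0 \<le> clip (f s) \<and> clip (f s) \<le> 1" for s by (auto simp: clip_def)
    show "(\<lambda>k. clip (F k s)) \<longlonglongrightarrow> clip (f s)" for s
      unfolding clip_def by (intro tendsto_intros baire_lim)
  qed (use baire_lim t in auto)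
qed

lemma borel_good:
  assumes t: "0 \<le> t" and gm: "g \<in> borel_measurable borel" and gb: "\<And>s. 0 \<le> g s \<and> g s \<le> 1"
  shows "Hgood t g"
proof (cases "t = 0")
  case True
  then show ?thesis using zero_good[OF gm gb] by simp
next
  case False
  then have "0 < t" using t by simp
  from baire_good[OF this baire_borel[OF gm]]
  show ?thesis using gb by (simp add: clip_def)
qed

end

locale mk = prob_space M for M :: "'w measure" +
  fixes K :: "real \<Rightarrow> (nat \<times> (nat \<Rightarrow> real)) measure"
    and T :: "nat \<Rightarrow> 'w \<Rightarrow> ereal" and Y :: "nat \<Rightarrow> 'w \<Rightarrow> nat \<times> (nat \<Rightarrow> real)"
  assumes mb: "marked_by M K T Y" and bk: "batch_kernel K" and Tm[measurable]: "\<And>n. T n \<in> borel_measurable M"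
begin

lemma Y_meas[measurable]: "Y n \<in> M \<rightarrow>\<^sub>M markM" using mb unfolding marked_by_def by auto

lemma Tv_meas[measurable]: "(\<lambda>\<omega> k. T k \<omega>) \<in> M \<rightarrow>\<^sub>M timesM"
  unfolding timesM_def by (rule measurable_PiM_single') (auto)

lemma K_meas: "K \<in> borel \<rightarrow>\<^sub>M subprob_algebra markM"
  using bk unfolding batch_kernel_def by (auto intro: measurable_prob_algebraD)

lemma K_space: "K s \<in> space (prob_algebra markM)"
  using bk unfolding batch_kernel_def by (auto dest: measurable_space)

lemma sets_K[simp]: "sets (K s) = sets markM" using K_space[of s] by (simp add: space_prob_algebra)
lemma space_K[simp]: "space (K s) = space markM" by (rule sets_eq_imp_space_eq) simp
lemma prob_K: "prob_space (K s)" using K_space[of s] by (simp add: space_prob_algebra)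

lemma Kn_meas[measurable]: "(\<lambda>\<omega>. K (real_of_ereal (T n \<omega>))) \<in> M \<rightarrow>\<^sub>M subprob_algebra markM"
  by (rule measurable_compose[OF _ K_meas]) measurable

lemma ennreal_prod_le1: "(\<And>i. i \<in> I \<Longrightarrow> f i \<le> (1::ennreal)) \<Longrightarrow> prod f I \<le> 1"
proof (induct I rule: infinite_finite_induct)
  case (insert x F)
  then have "f x * prod f F \<le> 1 * 1" by (intro mult_mono) auto
  then show ?case using insert by simp
qed auto

lemma nn_ind_rect:
  assumes C: "C \<in> sets timesM" and E: "E \<in> sets markM"
  shows "(\<integral>\<^sup>+y. indicator (C \<times> E) (a, y) \<partial>K s) = indicator C a * emeasure (K s) E"
proof -
  have "(\<integral>\<^sup>+y. indicator (C \<times> E) (a, y) \<partial>K s) = (\<integral>\<^sup>+y. indicator C a * indicator E y \<partial>K s)"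
    by (intro nn_integral_cong) (auto simp: indicator_def)
  also have "\<dots> = indicator C a * emeasure (K s) E"
    using E by (subst nn_integral_cmult_indicator) auto
  finally show ?thesis .
qed

definition LHSm :: "nat \<Rightarrow> (nat \<Rightarrow> (nat \<Rightarrow> ereal) \<times> (nat \<times> (nat \<Rightarrow> real)) \<Rightarrow> ennreal) \<Rightarrow> ennreal" where
  "LHSm N F = (\<integral>\<^sup>+\<omega>. (\<Prod>n<N. F n (\<lambda>k. T k \<omega>, Y n \<omega>)) \<partial>M)"

definition RHSm :: "nat \<Rightarrow> (nat \<Rightarrow> (nat \<Rightarrow> ereal) \<times> (nat \<times> (nat \<Rightarrow> real)) \<Rightarrow> ennreal) \<Rightarrow> ennreal" where
  "RHSm N F = (\<integral>\<^sup>+\<omega>. (\<Prod>n<N. \<integral>\<^sup>+y. F n (\<lambda>k. T k \<omega>, y) \<partial>K (real_of_ereal (T n \<omega>))) \<partial>M)"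

lemma base_case:
  assumes F: "\<And>n. n < N \<Longrightarrow> F n = indicator (C n \<times> E n)"
    and C: "\<And>n. C n \<in> sets timesM" and E: "\<And>n. E n \<in> sets markM"
  shows "LHSm N F = RHSm N F"
proof -
  define CC where "CC = {\<tau>\<in>space timesM. \<forall>n\<in>{..<N}. \<tau> \<in> C n}"
  have CC: "CC \<in> sets timesM" unfolding CC_def
    by (rule sets.sets_Collect_finite_All) (use C sets.Int_space_eq2 in \<open>auto simp: Int_def[symmetric] conj_commute\<close>)
  have tv: "(\<lambda>k. T k \<omega>) \<in> space timesM" if "\<omega> \<in> space M" for \<omega>
    using measurable_space[OF Tv_meas that] .
  have "LHSm N F = (\<integral>\<^sup>+\<omega>. indicator {\<omega>\<in>space M. (\<lambda>k. T k \<omega>) \<in> CC \<and> (\<forall>i<N. Y i \<omega> \<in> E i)} \<omega> \<partial>M)"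
    unfolding LHSm_def
    by (intro nn_integral_cong) (auto simp: F indicator_def CC_def tv prod.neutral_const)
  also have "\<dots> = emeasure M {\<omega>\<in>space M. (\<lambda>k. T k \<omega>) \<in> CC \<and> (\<forall>i<N. Y i \<omega> \<in> E i)}"
  proof (rule nn_integral_indicator)
    have "{\<omega>\<in>space M. (\<lambda>k. T k \<omega>) \<in> CC \<and> (\<forall>i<N. Y i \<omega> \<in> E i)} =
        ((\<lambda>\<omega> k. T k \<omega>) -` CC \<inter> space M) \<inter> {\<omega>\<in>space M. \<forall>i\<in>{..<N}. \<omega> \<in> Y i -` E i \<inter> space M}" by auto
    also have "\<dots> \<in> sets M"
      using CC E by (intro sets.Int sets.sets_Collect_finite_All measurable_sets[OF Tv_meas])
         (auto simp: Int_def[symmetric] sets.Int_space_eq2 measurable_sets[OF Y_meas])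
    finally show "{\<omega>\<in>space M. (\<lambda>k. T k \<omega>) \<in> CC \<and> (\<forall>i<N. Y i \<omega> \<in> E i)} \<in> sets M" .
  qed
  also have "\<dots> = (\<integral>\<^sup>+\<omega>. indicator CC (\<lambda>k. T k \<omega>) * (\<Prod>i<N. emeasure (K (real_of_ereal (T i \<omega>))) (E i)) \<partial>M)"
    using mb CC E unfolding marked_by_def by blast
  also have "\<dots> = RHSm N F"
    unfolding RHSm_def
  proof (intro nn_integral_cong)
    fix \<omega> assume w: "\<omega> \<in> space M"
    have "(\<Prod>n<N. \<integral>\<^sup>+y. F n (\<lambda>k. T k \<omega>, y) \<partial>K (real_of_ereal (T n \<omega>)))
        = (\<Prod>n<N. indicator (C n) (\<lambda>k. T k \<omega>) * emeasure (K (real_of_ereal (T n \<omega>))) (E n))"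
      by (intro prod.cong refl) (simp add: F nn_ind_rect C E)
    also have "\<dots> = (\<Prod>n<N. indicator (C n) (\<lambda>k. T k \<omega>)) * (\<Prod>n<N. emeasure (K (real_of_ereal (T n \<omega>))) (E n))"
      by (rule prod.distrib)
    also have "(\<Prod>n<N. indicator (C n) (\<lambda>k. T k \<omega>) :: ennreal) = indicator CC (\<lambda>k. T k \<omega>)"
      using tv[OF w] by (auto simp: CC_def indicator_def)
    finally show "indicator CC (\<lambda>k. T k \<omega>) * (\<Prod>i<N. emeasure (K (real_of_ereal (T i \<omega>))) (E i)) =
        (\<Prod>n<N. \<integral>\<^sup>+y. F n (\<lambda>k. T k \<omega>, y) \<partial>K (real_of_ereal (T n \<omega>)))" by simp
  qed
  finally show ?thesis .
qed


definition okF :: "(nat \<Rightarrow> (nat \<Rightarrow> ereal) \<times> (nat \<times> (nat \<Rightarrow> real)) \<Rightarrow> ennreal) \<Rightarrow> nat \<Rightarrow> bool" where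
  "okF F n \<longleftrightarrow> F n \<in> borel_measurable (timesM \<Otimes>\<^sub>M markM) \<and> (\<forall>x. F n x \<le> 1)"

definition rectF :: "(nat \<Rightarrow> (nat \<Rightarrow> ereal) \<times> (nat \<times> (nat \<Rightarrow> real)) \<Rightarrow> ennreal) \<Rightarrow> nat \<Rightarrow> bool" where
  "rectF F n \<longleftrightarrow> (\<exists>C E. C \<in> sets timesM \<and> E \<in> sets markM \<and> F n = indicator (C \<times> E))"

lemma rect_ok: "rectF F n \<Longrightarrow> okF F n"
  unfolding rectF_def okF_def by (auto simp: indicator_def)

lemma meas_comp1[measurable]: "okF F n \<Longrightarrow> (\<lambda>\<omega>. F n (\<lambda>k. T k \<omega>, Y m \<omega>)) \<in> borel_measurable M"
  unfolding okF_def by (auto intro: measurable_compose[OF measurable_Pair[OF Tv_meas Y_meas]])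

lemma meas_comp2:
  assumes "okF F n"
  shows "(\<lambda>\<omega>. \<integral>\<^sup>+y. F n (\<lambda>k. T k \<omega>, y) \<partial>K (real_of_ereal (T m \<omega>))) \<in> borel_measurable M"
proof (rule nn_integral_measurable_subprob_algebra2[OF _ Kn_meas])
  have "(\<lambda>p. (\<lambda>k. T k (fst p), snd p)) \<in> M \<Otimes>\<^sub>M markM \<rightarrow>\<^sub>M timesM \<Otimes>\<^sub>M markM"
    by (intro measurable_Pair measurable_compose[OF measurable_fst Tv_meas] measurable_snd)
  then show "(\<lambda>(\<omega>, y). F n (\<lambda>k. T k \<omega>, y)) \<in> borel_measurable (M \<Otimes>\<^sub>M markM)"
    using assms unfolding okF_def split_beta' by (auto intro: measurable_compose)
qed

lemma int_le1: "okF F n \<Longrightarrow> (\<integral>\<^sup>+y. F n (a, y) \<partial>K s) \<le> 1"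
proof -
  assume "okF F n"
  then have "(\<integral>\<^sup>+y. F n (a, y) \<partial>K s) \<le> (\<integral>\<^sup>+y. 1 \<partial>K s)" unfolding okF_def by (intro nn_integral_mono) auto
  also have "\<dots> = 1" using prob_space.emeasure_space_1[OF prob_K] by simp
  finally show ?thesis .
qed

lemma step_case:
  assumes jN: "j < N"
    and IH: "\<And>F. (\<And>n. n < j \<Longrightarrow> okF F n) \<Longrightarrow> (\<And>n. j \<le> n \<Longrightarrow> n < N \<Longrightarrow> rectF F n) \<Longrightarrow> LHSm N F = RHSm N F"
    and F1: "\<And>n. n < Suc j \<Longrightarrow> okF F n" and F2: "\<And>n. Suc j \<le> n \<Longrightarrow> n < N \<Longrightarrow> rectF F n"
  shows "LHSm N F = RHSm N F"
proof -
  have okall: "okF F n" if "n < N" for n using F1 F2 rect_ok that by (cases "n < Suc j") auto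
  define I where "I = {..<N} - {j}"
  have I: "finite I" "\<And>n. n \<in> I \<Longrightarrow> n < N" "j \<notin> I" unfolding I_def by auto
  define w where "w \<omega> = (\<Prod>n\<in>I. F n (\<lambda>k. T k \<omega>, Y n \<omega>))" for \<omega>
  define w' where "w' \<omega> = (\<Prod>n\<in>I. \<integral>\<^sup>+y. F n (\<lambda>k. T k \<omega>, y) \<partial>K (real_of_ereal (T n \<omega>)))" for \<omega>
  have wm[measurable]: "w \<in> borel_measurable M" unfolding w_def
    by (intro borel_measurable_prod_ennreal meas_comp1 okall I(2))
  have wm'[measurable]: "w' \<in> borel_measurable M" unfolding w'_def
    by (intro borel_measurable_prod_ennreal meas_comp2 okall I(2))
  have w1: "w \<omega> \<le> 1" for \<omega> unfolding w_def by (intro ennreal_prod_le1) (metis okF_def okall I(2))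
  have Pm: "(\<lambda>\<omega>. ((\<lambda>k. T k \<omega>), Y j \<omega>)) \<in> M \<rightarrow>\<^sub>M timesM \<Otimes>\<^sub>M markM" by measurable
  define \<kappa> where "\<kappa> \<omega> = distr (K (real_of_ereal (T j \<omega>))) (timesM \<Otimes>\<^sub>M markM) (\<lambda>y. ((\<lambda>k. T k \<omega>), y))" for \<omega>
  have \<kappa>m: "\<kappa> \<in> M \<rightarrow>\<^sub>M subprob_algebra (timesM \<Otimes>\<^sub>M markM)" unfolding \<kappa>_def
  proof (rule measurable_distr2[OF _ Kn_meas])
    show "(\<lambda>(\<omega>, y). ((\<lambda>k. T k \<omega>), y)) \<in> M \<Otimes>\<^sub>M markM \<rightarrow>\<^sub>M timesM \<Otimes>\<^sub>M markM"
      unfolding split_beta' by (intro measurable_Pair measurable_compose[OF measurable_fst Tv_meas] measurable_snd)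
  qed
  have tv: "(\<lambda>k. T k \<omega>) \<in> space timesM" if "\<omega> \<in> space M" for \<omega>
    using measurable_space[OF Tv_meas that] .
  have Pairm: "(\<lambda>y. ((\<lambda>k. T k \<omega>), y)) \<in> K s \<rightarrow>\<^sub>M timesM \<Otimes>\<^sub>M markM" if "\<omega> \<in> space M" for \<omega> s
    using tv[OF that] by (intro measurable_Pair) (auto simp: measurable_cong_sets[OF sets_K refl])
  define P1 where "P1 = distr (density M w) (timesM \<Otimes>\<^sub>M markM) (\<lambda>\<omega>. ((\<lambda>k. T k \<omega>), Y j \<omega>))"
  define P2 where "P2 = density M w' \<bind> \<kappa>"
  have sp: "space (density M w') \<noteq> {}" using not_empty by simp
  have \<kappa>m': "\<kappa> \<in> density M w' \<rightarrow>\<^sub>M subprob_algebra (timesM \<Otimes>\<^sub>M markM)" using \<kappa>m by simp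
  have sets_\<kappa>: "sets (\<kappa> \<omega>) = sets (timesM \<Otimes>\<^sub>M markM)" for \<omega> by (simp add: \<kappa>_def)
  have eqrect: "emeasure P1 (C \<times> E) = emeasure P2 (C \<times> E)" if C: "C \<in> sets timesM" and E: "E \<in> sets markM" for C E
  proof -
    define F' where "F' = F(j := indicator (C \<times> E))"
    have "LHSm N F' = RHSm N F'"
    proof (rule IH)
      show "okF F' n" if "n < j" for n using F1[of n] that unfolding okF_def F'_def by auto
      show "rectF F' n" if "j \<le> n" "n < N" for n
      proof (cases "n = j")
        case True then show ?thesis unfolding rectF_def F'_def using C E by auto
      next
        case False then show ?thesis using F2[of n] that unfolding rectF_def F'_def by auto
      qed
    qed
    moreover have "LHSm N F' = (\<integral>\<^sup>+\<omega>. w \<omega> * indicator (C \<times> E) ((\<lambda>k. T k \<omega>), Y j \<omega>) \<partial>M)"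
      unfolding LHSm_def
    proof (intro nn_integral_cong)
      fix \<omega>
      have "(\<Prod>n<N. F' n (\<lambda>k. T k \<omega>, Y n \<omega>)) = F' j (\<lambda>k. T k \<omega>, Y j \<omega>) * (\<Prod>n\<in>I. F' n (\<lambda>k. T k \<omega>, Y n \<omega>))"
        unfolding I_def using jN by (intro prod.remove) auto
      also have "(\<Prod>n\<in>I. F' n (\<lambda>k. T k \<omega>, Y n \<omega>)) = w \<omega>" unfolding w_def F'_def using I(3)
        by (intro prod.cong refl) auto
      finally show "(\<Prod>n<N. F' n (\<lambda>k. T k \<omega>, Y n \<omega>)) = w \<omega> * indicator (C \<times> E) ((\<lambda>k. T k \<omega>), Y j \<omega>)"
        by (simp add: F'_def mult.commute)
    qed
    moreover have "RHSm N F' = (\<integral>\<^sup>+\<omega>. w' \<omega> * (indicator C (\<lambda>k. T k \<omega>) * emeasure (K (real_of_ereal (T j \<omega>))) E) \<partial>M)"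
      unfolding RHSm_def
    proof (intro nn_integral_cong)
      fix \<omega>
      have "(\<Prod>n<N. \<integral>\<^sup>+y. F' n (\<lambda>k. T k \<omega>, y) \<partial>K (real_of_ereal (T n \<omega>)))
          = (\<integral>\<^sup>+y. F' j (\<lambda>k. T k \<omega>, y) \<partial>K (real_of_ereal (T j \<omega>))) * (\<Prod>n\<in>I. \<integral>\<^sup>+y. F' n (\<lambda>k. T k \<omega>, y) \<partial>K (real_of_ereal (T n \<omega>)))"
        unfolding I_def using jN by (intro prod.remove) auto
      also have "(\<Prod>n\<in>I. \<integral>\<^sup>+y. F' n (\<lambda>k. T k \<omega>, y) \<partial>K (real_of_ereal (T n \<omega>))) = w' \<omega>" unfolding w'_def F'_def using I(3)
        by (intro prod.cong refl) auto
      finally show "(\<Prod>n<N. \<integral>\<^sup>+y. F' n (\<lambda>k. T k \<omega>, y) \<partial>K (real_of_ereal (T n \<omega>))) = w' \<omega> * (indicator C (\<lambda>k. T k \<omega>) * emeasure (K (real_of_ereal (T j \<omega>))) E)"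
        by (simp add: F'_def nn_ind_rect C E mult.commute)
    qed
    moreover have "emeasure P1 (C \<times> E) = (\<integral>\<^sup>+\<omega>. w \<omega> * indicator (C \<times> E) ((\<lambda>k. T k \<omega>), Y j \<omega>) \<partial>M)"
    proof -
      have CE: "C \<times> E \<in> sets (timesM \<Otimes>\<^sub>M markM)" using C E by auto
      have "emeasure P1 (C \<times> E) = emeasure (density M w) ((\<lambda>\<omega>. ((\<lambda>k. T k \<omega>), Y j \<omega>)) -` (C \<times> E) \<inter> space M)"
        unfolding P1_def using CE Pm by (subst emeasure_distr) auto
      also have "\<dots> = (\<integral>\<^sup>+\<omega>. w \<omega> * indicator ((\<lambda>\<omega>. ((\<lambda>k. T k \<omega>), Y j \<omega>)) -` (C \<times> E) \<inter> space M) \<omega> \<partial>M)"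
        using CE Pm by (intro emeasure_density wm) (auto intro: measurable_sets)
      also have "\<dots> = (\<integral>\<^sup>+\<omega>. w \<omega> * indicator (C \<times> E) ((\<lambda>k. T k \<omega>), Y j \<omega>) \<partial>M)"
        by (intro nn_integral_cong) (auto simp: indicator_def)
      finally show ?thesis .
    qed
    moreover have "emeasure P2 (C \<times> E) = (\<integral>\<^sup>+\<omega>. w' \<omega> * (indicator C (\<lambda>k. T k \<omega>) * emeasure (K (real_of_ereal (T j \<omega>))) E) \<partial>M)"
    proof -
      have CE: "C \<times> E \<in> sets (timesM \<Otimes>\<^sub>M markM)" using C E by auto
      have "emeasure P2 (C \<times> E) = (\<integral>\<^sup>+\<omega>. emeasure (\<kappa> \<omega>) (C \<times> E) \<partial>density M w')"
        unfolding P2_def by (rule emeasure_bind[OF sp \<kappa>m' CE])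
      also have "\<dots> = (\<integral>\<^sup>+\<omega>. w' \<omega> * emeasure (\<kappa> \<omega>) (C \<times> E) \<partial>M)"
        by (intro nn_integral_density wm' measurable_compose[OF \<kappa>m measurable_emeasure_subprob_algebra] CE)
      also have "\<dots> = (\<integral>\<^sup>+\<omega>. w' \<omega> * (indicator C (\<lambda>k. T k \<omega>) * emeasure (K (real_of_ereal (T j \<omega>))) E) \<partial>M)"
      proof (intro nn_integral_cong)
        fix \<omega> assume w: "\<omega> \<in> space M"
        have "emeasure (\<kappa> \<omega>) (C \<times> E) = emeasure (K (real_of_ereal (T j \<omega>))) ((\<lambda>y. ((\<lambda>k. T k \<omega>), y)) -` (C \<times> E) \<inter> space (K (real_of_ereal (T j \<omega>))))"
          unfolding \<kappa>_def using CE Pairm[OF w] by (subst emeasure_distr) auto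
        also have "\<dots> = indicator C (\<lambda>k. T k \<omega>) * emeasure (K (real_of_ereal (T j \<omega>))) E"
          using sets.sets_into_space[OF E] by (cases "(\<lambda>k. T k \<omega>) \<in> C") (auto simp: Int_absorb2)
        finally show "w' \<omega> * emeasure (\<kappa> \<omega>) (C \<times> E) = w' \<omega> * (indicator C (\<lambda>k. T k \<omega>) * emeasure (K (real_of_ereal (T j \<omega>))) E)"
          by simp
      qed
      finally show ?thesis .
    qed
    ultimately show ?thesis by simp
  qed
  have P12: "P1 = P2"
  proof (rule measure_eqI_generator_eq[OF Int_stable_pair_measure_generator[of timesM markM] pair_measure_closed])
    show "emeasure P1 X = emeasure P2 X" if "X \<in> {a \<times> b |a b. a \<in> sets timesM \<and> b \<in> sets markM}" for X
      using that eqrect by auto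
    show "sets P1 = sigma_sets (space timesM \<times> space markM) {a \<times> b |a b. a \<in> sets timesM \<and> b \<in> sets markM}"
      unfolding P1_def by (simp add: sets_pair_measure)
    show "sets P2 = sigma_sets (space timesM \<times> space markM) {a \<times> b |a b. a \<in> sets timesM \<and> b \<in> sets markM}"
    proof -
      have "sets P2 = sets (timesM \<Otimes>\<^sub>M markM)" unfolding P2_def by (rule sets_bind[OF _ sp]) (simp add: sets_\<kappa>)
      then show ?thesis by (simp add: sets_pair_measure)
    qed
    show "range (\<lambda>_. space timesM \<times> space markM) \<subseteq> {a \<times> b |a b. a \<in> sets timesM \<and> b \<in> sets markM}"
      by auto
    show "(\<Union>i::nat. space timesM \<times> space markM) = space timesM \<times> space markM" by simp
    show "emeasure P1 (space timesM \<times> space markM) \<noteq> \<infinity>"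
    proof -
      have "emeasure P1 (space timesM \<times> space markM) \<le> emeasure P1 (space P1)"
        by (intro emeasure_mono) (auto simp: P1_def space_pair_measure)
      also have "\<dots> = emeasure (density M w) (space M)" unfolding P1_def
      proof -
        have "(\<lambda>\<omega>. (\<lambda>k. T k \<omega>, Y j \<omega>)) -` (space timesM \<times> space markM) \<inter> space M = space M"
          using measurable_space[OF Pm] by (auto simp: space_pair_measure)
        then show "emeasure (distr (density M w) (timesM \<Otimes>\<^sub>M markM) (\<lambda>\<omega>. (\<lambda>k. T k \<omega>, Y j \<omega>))) (space (distr (density M w) (timesM \<Otimes>\<^sub>M markM) (\<lambda>\<omega>. (\<lambda>k. T k \<omega>, Y j \<omega>)))) = emeasure (density M w) (space M)"
          using Pm by (subst emeasure_distr) (auto simp: space_pair_measure)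
      qed
      also have "\<dots> = (\<integral>\<^sup>+\<omega>. w \<omega> * indicator (space M) \<omega> \<partial>M)" by (rule emeasure_density) auto
      also have "\<dots> \<le> (\<integral>\<^sup>+\<omega>. 1 \<partial>M)" using w1 by (intro nn_integral_mono) (auto simp: indicator_def)
      also have "\<dots> = 1" using emeasure_space_1 by simp
      finally show ?thesis by (auto simp: top_unique)
    qed
  qed
  have "LHSm N F = (\<integral>\<^sup>+\<omega>. w \<omega> * F j ((\<lambda>k. T k \<omega>), Y j \<omega>) \<partial>M)"
    unfolding LHSm_def
  proof (intro nn_integral_cong)
    fix \<omega>
    have "(\<Prod>n<N. F n (\<lambda>k. T k \<omega>, Y n \<omega>)) = F j (\<lambda>k. T k \<omega>, Y j \<omega>) * w \<omega>"
      unfolding I_def w_def using jN by (intro prod.remove) auto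
    then show "(\<Prod>n<N. F n (\<lambda>k. T k \<omega>, Y n \<omega>)) = w \<omega> * F j ((\<lambda>k. T k \<omega>), Y j \<omega>)" by (simp add: mult.commute)
  qed
  also have "\<dots> = (\<integral>\<^sup>+z. F j z \<partial>P1)"
  proof -
    have Fj[measurable]: "F j \<in> borel_measurable (timesM \<Otimes>\<^sub>M markM)" using okall[OF jN] unfolding okF_def by auto
    have "(\<integral>\<^sup>+z. F j z \<partial>P1) = (\<integral>\<^sup>+\<omega>. F j ((\<lambda>k. T k \<omega>), Y j \<omega>) \<partial>density M w)"
      unfolding P1_def using Pm by (subst nn_integral_distr) auto
    also have "\<dots> = (\<integral>\<^sup>+\<omega>. w \<omega> * F j ((\<lambda>k. T k \<omega>), Y j \<omega>) \<partial>M)"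
      by (intro nn_integral_density wm) measurable
    finally show ?thesis by simp
  qed
  also have "\<dots> = (\<integral>\<^sup>+z. F j z \<partial>P2)" by (simp add: P12)
  also have "\<dots> = RHSm N F"
  proof -
    have Fj[measurable]: "F j \<in> borel_measurable (timesM \<Otimes>\<^sub>M markM)" using okall[OF jN] unfolding okF_def by auto
    have "(\<integral>\<^sup>+z. F j z \<partial>P2) = (\<integral>\<^sup>+\<omega>. \<integral>\<^sup>+z. F j z \<partial>\<kappa> \<omega> \<partial>density M w')"
      unfolding P2_def by (rule nn_integral_bind[OF Fj \<kappa>m'])
    also have "\<dots> = (\<integral>\<^sup>+\<omega>. \<integral>\<^sup>+y. F j ((\<lambda>k. T k \<omega>), y) \<partial>K (real_of_ereal (T j \<omega>)) \<partial>density M w')"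
    proof (intro nn_integral_cong)
      fix \<omega> assume "\<omega> \<in> space (density M w')"
      then have w: "\<omega> \<in> space M" by simp
      show "(\<integral>\<^sup>+z. F j z \<partial>\<kappa> \<omega>) = (\<integral>\<^sup>+y. F j ((\<lambda>k. T k \<omega>), y) \<partial>K (real_of_ereal (T j \<omega>)))"
        unfolding \<kappa>_def using Pairm[OF w] by (subst nn_integral_distr) auto
    qed
    also have "\<dots> = (\<integral>\<^sup>+\<omega>. w' \<omega> * \<integral>\<^sup>+y. F j ((\<lambda>k. T k \<omega>), y) \<partial>K (real_of_ereal (T j \<omega>)) \<partial>M)"
      by (intro nn_integral_density wm' meas_comp2 okall jN)
    also have "\<dots> = RHSm N F"
      unfolding RHSm_def
    proof (intro nn_integral_cong)
      fix \<omega>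
      have "(\<Prod>n<N. \<integral>\<^sup>+y. F n (\<lambda>k. T k \<omega>, y) \<partial>K (real_of_ereal (T n \<omega>)))
          = (\<integral>\<^sup>+y. F j (\<lambda>k. T k \<omega>, y) \<partial>K (real_of_ereal (T j \<omega>))) * w' \<omega>"
        unfolding I_def w'_def using jN by (intro prod.remove) auto
      then show "w' \<omega> * (\<integral>\<^sup>+y. F j ((\<lambda>k. T k \<omega>), y) \<partial>K (real_of_ereal (T j \<omega>))) =
          (\<Prod>n<N. \<integral>\<^sup>+y. F n (\<lambda>k. T k \<omega>, y) \<partial>K (real_of_ereal (T n \<omega>)))" by (simp add: mult.commute)
    qed
    finally show ?thesis .
  qed
  finally show ?thesis .
qed


lemma all_rect:
  assumes "\<And>n. n < N \<Longrightarrow> rectF F n"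
  shows "LHSm N F = RHSm N F"
proof -
  have "\<forall>n. \<exists>CE. n < N \<longrightarrow> fst CE \<in> sets timesM \<and> snd CE \<in> sets markM \<and> F n = indicator (fst CE \<times> snd CE)"
    using assms unfolding rectF_def by fastforce
  then obtain f where f: "\<And>n. n < N \<Longrightarrow> fst (f n) \<in> sets timesM \<and> snd (f n) \<in> sets markM \<and> F n = indicator (fst (f n) \<times> snd (f n))"
    by metis
  define C where "C n = (if n < N then fst (f n) else {})" for n
  define E where "E n = (if n < N then snd (f n) else {})" for n
  show ?thesis
    by (rule base_case[of N F C E]) (use f in \<open>auto simp: C_def E_def\<close>)
qed

lemma marked_prod:
  assumes "\<And>n. n < N \<Longrightarrow> okF F n"
  shows "LHSm N F = RHSm N F"
proof -
  have "j \<le> N \<Longrightarrow> (\<forall>F. (\<forall>n<j. okF F n) \<longrightarrow> (\<forall>n. j \<le> n \<longrightarrow> n < N \<longrightarrow> rectF F n) \<longrightarrow> LHSm N F = RHSm N F)" for j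
  proof (induct j)
    case 0
    then show ?case using all_rect by auto
  next
    case (Suc j)
    show ?case
    proof (intro allI impI)
      fix F assume F1: "\<forall>n<Suc j. okF F n" and F2: "\<forall>n. Suc j \<le> n \<longrightarrow> n < N \<longrightarrow> rectF F n"
      show "LHSm N F = RHSm N F"
        by (rule step_case[where j=j]) (use Suc F1 F2 in auto)
    qed
  qed
  from this[of N] show ?thesis using assms by auto
qed

end

definition Hf :: "real \<Rightarrow> real \<Rightarrow> real \<Rightarrow> real \<Rightarrow> real \<Rightarrow> nat \<times> (nat \<Rightarrow> real) \<Rightarrow> real" where
  "Hf t \<alpha> \<beta> \<gamma> s y = (\<Sum>j<fst y.
                  \<beta> * (if snd y j > t - s then 1 else 0)
                + \<gamma> * (if snd y j \<le> t - s then 1 else 0)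
                + \<alpha> * max 0 (snd y j - (t - s)))"

lemma Hf_meas: "(\<lambda>p. Hf t \<alpha> \<beta> \<gamma> (fst p) (snd p)) \<in> borel_measurable (borel \<Otimes>\<^sub>M markM)"
proof -
  define G where "G b p = (\<Sum>j<b.
                  \<beta> * (if snd (snd p) j > t - fst p then 1 else 0)
                + \<gamma> * (if snd (snd p) j \<le> t - fst p then 1 else 0)
                + \<alpha> * max 0 (snd (snd p) j - (t - fst p)))" for b and p :: "real \<times> nat \<times> (nat \<Rightarrow> real)"
  have "(\<lambda>p. G (fst (snd p)) p) \<in> borel_measurable (borel \<Otimes>\<^sub>M markM)"
  proof (rule measurable_compose_countable)
    show "(\<lambda>p. fst (snd p)) \<in> borel \<Otimes>\<^sub>M markM \<rightarrow>\<^sub>M count_space UNIV" unfolding markM_def by measurable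
    fix b show "G b \<in> borel_measurable (borel \<Otimes>\<^sub>M markM)" unfolding G_def markM_def by measurable
  qed
  moreover have "(\<lambda>p. G (fst (snd p)) p) = (\<lambda>p. Hf t \<alpha> \<beta> \<gamma> (fst p) (snd p))"
    by (auto simp: fun_eq_iff G_def Hf_def)
  ultimately show ?thesis by simp
qed

lemma Hf_nonneg: "0 \<le> \<alpha> \<Longrightarrow> 0 \<le> \<beta> \<Longrightarrow> 0 \<le> \<gamma> \<Longrightarrow> 0 \<le> Hf t \<alpha> \<beta> \<gamma> s y"
  unfolding Hf_def by (intro sum_nonneg) auto


lemma real_card_filter: fixes b :: nat shows "real (card {j. j < b \<and> P j}) = (\<Sum>j<b. if P j then 1 else 0)"
proof -
  have "{j. j < b \<and> P j} = {j\<in>{..<b}. P j}" by auto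
  moreover have "real (card {j\<in>{..<b}. P j}) = (\<Sum>j\<in>{j\<in>{..<b}. P j}. 1)" by simp
  moreover have "(\<Sum>j\<in>{j\<in>{..<b}. P j}. 1) = (\<Sum>j<b. if P j then 1 else (0::real))"
    by (rule sum.inter_filter) simp
  ultimately show ?thesis by simp
qed

locale full = nctx M lam T + mk M K T Y for M :: "'w measure" and lam K T Y
begin

lemma step1_lhs:
  assumes w: "\<omega> \<in> space M"
  shows "exp (- \<alpha> * Wload T Y t \<omega> - \<beta> * real (Qnum T Y t \<omega>) - \<gamma> * real (Dnum T Y t \<omega>))
       = (\<Prod>n\<in>arrivals T \<omega> t. exp (- Hf t \<alpha> \<beta> \<gamma> (real_of_ereal (T n \<omega>)) (Y n \<omega>)))"
proof -
  have "\<alpha> * Wload T Y t \<omega> + \<beta> * real (Qnum T Y t \<omega>) + \<gamma> * real (Dnum T Y t \<omega>)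
      = (\<Sum>n\<in>arrivals T \<omega> t. Hf t \<alpha> \<beta> \<gamma> (real_of_ereal (T n \<omega>)) (Y n \<omega>))"
    unfolding Wload_def Qnum_def Dnum_def Hf_def of_nat_sum real_card_filter
    by (simp add: sum_distrib_left sum.distrib)
  then have "- \<alpha> * Wload T Y t \<omega> - \<beta> * real (Qnum T Y t \<omega>) - \<gamma> * real (Dnum T Y t \<omega>)
      = (\<Sum>n\<in>arrivals T \<omega> t. - Hf t \<alpha> \<beta> \<gamma> (real_of_ereal (T n \<omega>)) (Y n \<omega>))"
    by (simp add: sum_negf)
  then show ?thesis by (simp add: exp_sum[OF arr_fin[OF w]])
qed

lemma trunc_prod:
  assumes w: "\<omega> \<in> space M" and N: "0 < N" and f: "\<And>n. 0 \<le> f n"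
  shows "(\<Prod>n<N. ennreal (if n = 0 then (if \<forall>k. T k \<omega> \<le> ereal t \<longrightarrow> k < N then 1 else 0) else 1) *
             ennreal (if T n \<omega> \<le> ereal t then f n else 1))
       = ennreal ((if \<forall>k. T k \<omega> \<le> ereal t \<longrightarrow> k < N then 1 else 0) * (\<Prod>n\<in>arrivals T \<omega> t. f n))"
proof -
  define I :: real where "I = (if \<forall>k. T k \<omega> \<le> ereal t \<longrightarrow> k < N then 1 else 0)"
  have "(\<Prod>n<N. ennreal (if n = 0 then I else 1) * ennreal (if T n \<omega> \<le> ereal t then f n else 1))
      = (\<Prod>n<N. ennreal (if n = 0 then I else 1)) * (\<Prod>n<N. ennreal (if T n \<omega> \<le> ereal t then f n else 1))"
    by (rule prod.distrib)
  also have "(\<Prod>n<N. ennreal (if n = 0 then I else 1)) = ennreal I"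
    using N by (simp add: if_distrib[of ennreal] cong: if_cong)
  also have "(\<Prod>n<N. ennreal (if T n \<omega> \<le> ereal t then f n else 1)) = ennreal (\<Prod>n<N. if T n \<omega> \<le> ereal t then f n else 1)"
    using f by (intro prod_ennreal) auto
  also have "ennreal I * ennreal (\<Prod>n<N. if T n \<omega> \<le> ereal t then f n else 1) = ennreal (I * (\<Prod>n\<in>arrivals T \<omega> t. f n))"
  proof (cases "\<forall>k. T k \<omega> \<le> ereal t \<longrightarrow> k < N")
    case True
    then have e: "{n\<in>{..<N}. T n \<omega> \<le> ereal t} = arrivals T \<omega> t" by (auto simp: arrivals_def)
    have "(\<Prod>n<N. if T n \<omega> \<le> ereal t then f n else 1) = (\<Prod>n\<in>arrivals T \<omega> t. f n)"
      by (simp only: prod.inter_filter[OF finite_lessThan, symmetric] e)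
    moreover have "I = 1" using True by (simp add: I_def)
    ultimately show ?thesis by simp
  next
    case False
    then have "I = 0" by (simp add: I_def)
    then show ?thesis by simp
  qed
  finally show ?thesis unfolding I_def .
qed


lemma trunc_lim:
  fixes Z :: "'w \<Rightarrow> real"
  assumes Zm[measurable]: "Z \<in> borel_measurable M" and Zb: "\<And>\<omega>. \<bar>Z \<omega>\<bar> \<le> 1"
  shows "(\<lambda>m. \<integral>\<omega>. (if \<forall>k. T k \<omega> \<le> ereal t \<longrightarrow> k < Suc m then 1 else 0) * Z \<omega> \<partial>M) \<longlonglongrightarrow> (\<integral>\<omega>. Z \<omega> \<partial>M)"
proof (rule integral_dominated_convergence[where w="\<lambda>_. 1"])
  show "AE \<omega> in M. (\<lambda>m. (if \<forall>k. T k \<omega> \<le> ereal t \<longrightarrow> k < Suc m then 1 else 0) * Z \<omega>) \<longlonglongrightarrow> Z \<omega>"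
  proof (rule AE_I2)
    fix \<omega> assume w: "\<omega> \<in> space M"
    obtain N0 where N0: "arrivals T \<omega> t \<subseteq> {..<N0}" using arr_fin[OF w] by (meson finite_nat_iff_bounded)
    have "\<forall>\<^sub>F m in sequentially. (if \<forall>k. T k \<omega> \<le> ereal t \<longrightarrow> k < Suc m then 1 else 0) * Z \<omega> = Z \<omega>"
      unfolding eventually_sequentially
    proof (intro exI allI impI)
      fix m assume "N0 \<le> m"
      then have "\<forall>k. T k \<omega> \<le> ereal t \<longrightarrow> k < Suc m" using N0 by (auto simp: arrivals_def)
      then show "(if \<forall>k. T k \<omega> \<le> ereal t \<longrightarrow> k < Suc m then 1 else 0) * Z \<omega> = Z \<omega>" by simp
    qed
    then show "(\<lambda>m. (if \<forall>k. T k \<omega> \<le> ereal t \<longrightarrow> k < Suc m then 1 else 0) * Z \<omega>) \<longlonglongrightarrow> Z \<omega>"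
      by (rule tendsto_eventually)
  qed
  show "AE \<omega> in M. norm ((if \<forall>k. T k \<omega> \<le> ereal t \<longrightarrow> k < Suc m then 1 else 0) * Z \<omega>) \<le> 1" for m
    using Zb by auto
qed auto

lemma main:
  assumes t: "0 \<le> t" and a: "0 \<le> \<alpha>" "0 \<le> \<beta>" "0 \<le> \<gamma>"
  shows "(\<integral>\<omega>. exp (- \<alpha> * Wload T Y t \<omega> - \<beta> * real (Qnum T Y t \<omega>) - \<gamma> * real (Dnum T Y t \<omega>)) \<partial>M)
       = exp (- (LINT s:{0..t}|lborel. (\<integral>y. 1 - exp (- Hf t \<alpha> \<beta> \<gamma> s y) \<partial>K s) * lam s))"
proof -
  define \<phi> where "\<phi> s y = exp (- Hf t \<alpha> \<beta> \<gamma> s y)" for s y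
  define g where "g s = (\<integral>y. \<phi> s y \<partial>K s)" for s
  have \<phi>m: "(\<lambda>p. \<phi> (fst p) (snd p)) \<in> borel_measurable (borel \<Otimes>\<^sub>M markM)"
    unfolding \<phi>_def by (rule measurable_compose[OF Hf_meas, of "\<lambda>x. exp (- x)"]) measurable
  have \<phi>b: "0 \<le> \<phi> s y \<and> \<phi> s y \<le> 1" for s y
    unfolding \<phi>_def using Hf_nonneg[OF a, of t s y] by auto
  have \<phi>y: "(\<lambda>y. \<phi> s y) \<in> borel_measurable (K s)" for s
  proof -
    have "(\<lambda>y. (s, y)) \<in> markM \<rightarrow>\<^sub>M borel \<Otimes>\<^sub>M markM" by measurable
    from measurable_compose[OF this \<phi>m] show ?thesis by (simp add: measurable_cong_sets[OF sets_K refl])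
  qed
  have \<phi>int: "integrable (K s) (\<lambda>y. \<phi> s y)" for s
  proof -
    interpret P: prob_space "K s" by (rule prob_K)
    show ?thesis by (rule P.integrable_const_bound[where B=1]) (use \<phi>b \<phi>y in auto)
  qed
  have gK: "(\<integral>\<^sup>+y. ennreal (\<phi> s y) \<partial>K s) = ennreal (g s)" for s
    unfolding g_def by (rule nn_integral_eq_integral[OF \<phi>int]) (use \<phi>b in auto)
  have gb: "0 \<le> g s \<and> g s \<le> 1" for s
  proof -
    interpret P: prob_space "K s" by (rule prob_K)
    have "g s \<le> (\<integral>y. 1 \<partial>K s)" unfolding g_def
      by (intro integral_mono \<phi>int) (use \<phi>b in auto)
    moreover have "(\<integral>y. 1 \<partial>K s) = (1::real)" using P.prob_space by simp
    ultimately show ?thesis unfolding g_def using \<phi>b by (auto intro: integral_nonneg)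
  qed
  have gm: "g \<in> borel_measurable borel"
  proof -
    have "(\<lambda>s. \<integral>\<^sup>+y. ennreal (\<phi> s y) \<partial>K s) \<in> borel_measurable borel"
    proof (rule nn_integral_measurable_subprob_algebra2[OF _ K_meas])
      show "(\<lambda>(s, y). ennreal (\<phi> s y)) \<in> borel_measurable (borel \<Otimes>\<^sub>M markM)"
        using \<phi>m unfolding split_beta' by measurable
    qed
    then have "(\<lambda>s. enn2real (\<integral>\<^sup>+y. ennreal (\<phi> s y) \<partial>K s)) \<in> borel_measurable borel" by measurable
    then show ?thesis using gK gb by simp
  qed
  have good: "Hgood t g" by (rule borel_good[OF t gm gb])
  define PP where "PP \<omega> = (\<Prod>n\<in>arrivals T \<omega> t. \<phi> (real_of_ereal (T n \<omega>)) (Y n \<omega>))" for \<omega>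
  have PPm[measurable]: "PP \<in> borel_measurable M" unfolding PP_def
  proof (rule prod_arr_meas)
    fix n
    have "(\<lambda>\<omega>. (real_of_ereal (T n \<omega>), Y n \<omega>)) \<in> M \<rightarrow>\<^sub>M borel \<Otimes>\<^sub>M markM" by measurable
    from measurable_compose[OF this \<phi>m] show "(\<lambda>\<omega>. \<phi> (real_of_ereal (T n \<omega>)) (Y n \<omega>)) \<in> borel_measurable M" by simp
  qed
  have PPb: "0 \<le> PP \<omega> \<and> PP \<omega> \<le> 1" for \<omega> unfolding PP_def by (intro conjI prod_nonneg prod_le_1) (simp_all add: \<phi>b)
  have PGm[measurable]: "PiG t g \<in> borel_measurable M" using gm by (rule PiG_meas)
  have PGb: "0 \<le> PiG t g \<omega> \<and> PiG t g \<omega> \<le> 1" for \<omega> by (rule PiG_bounds[OF gb])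
  have trunc: "(\<integral>\<omega>. (if \<forall>k. T k \<omega> \<le> ereal t \<longrightarrow> k < N then 1 else 0) * PP \<omega> \<partial>M)
      = (\<integral>\<omega>. (if \<forall>k. T k \<omega> \<le> ereal t \<longrightarrow> k < N then 1 else 0) * PiG t g \<omega> \<partial>M)" if N: "0 < N" for N
  proof -
    define F where "F n p = ennreal (if n = 0 then (if \<forall>k. fst p k \<le> ereal t \<longrightarrow> k < N then 1 else 0) else 1) *
        ennreal (if fst p n \<le> ereal t then \<phi> (real_of_ereal (fst p n)) (snd p) else 1)" for n
        and p :: "(nat \<Rightarrow> ereal) \<times> (nat \<times> (nat \<Rightarrow> real))"
    have fstk[measurable]: "(\<lambda>p. fst p k) \<in> borel_measurable (timesM \<Otimes>\<^sub>M markM)" for k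
    proof -
      have "(\<lambda>\<tau>. \<tau> k) \<in> borel_measurable timesM" unfolding timesM_def by measurable
      then show ?thesis by (rule measurable_compose[OF measurable_fst])
    qed
    have \<phi>n[measurable]: "(\<lambda>p. \<phi> (real_of_ereal (fst p n)) (snd p)) \<in> borel_measurable (timesM \<Otimes>\<^sub>M markM)" for n
    proof -
      have "(\<lambda>p. (real_of_ereal (fst p n), snd p)) \<in> timesM \<Otimes>\<^sub>M markM \<rightarrow>\<^sub>M borel \<Otimes>\<^sub>M markM" by measurable
      from measurable_compose[OF this \<phi>m] show ?thesis by simp
    qed
    have ok: "okF F n" for n
    proof -
      have "F n \<in> borel_measurable (timesM \<Otimes>\<^sub>M markM)" unfolding F_def by measurable
      moreover have "F n x \<le> 1" for x
      proof -
        define u where "u = (if n = 0 then (if \<forall>k. fst x k \<le> ereal t \<longrightarrow> k < N then 1 else 0) else (1::real))"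
        define v where "v = (if fst x n \<le> ereal t then \<phi> (real_of_ereal (fst x n)) (snd x) else 1)"
        have uv: "0 \<le> u" "u \<le> 1" "0 \<le> v" "v \<le> 1" unfolding u_def v_def using \<phi>b by auto
        have "F n x = ennreal (u * v)" unfolding F_def u_def[symmetric] v_def[symmetric] using uv by (simp add: ennreal_mult)
        also have "\<dots> \<le> ennreal 1" using uv by (intro ennreal_leI) (simp add: mult_le_one)
        finally show ?thesis by simp
      qed
      ultimately show ?thesis unfolding okF_def by auto
    qed
    have L: "LHSm N F = (\<integral>\<^sup>+\<omega>. ennreal ((if \<forall>k. T k \<omega> \<le> ereal t \<longrightarrow> k < N then 1 else 0) * PP \<omega>) \<partial>M)"
      unfolding LHSm_def
    proof (intro nn_integral_cong)
      fix \<omega> assume w: "\<omega> \<in> space M"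
      show "(\<Prod>n<N. F n (\<lambda>k. T k \<omega>, Y n \<omega>)) = ennreal ((if \<forall>k. T k \<omega> \<le> ereal t \<longrightarrow> k < N then 1 else 0) * PP \<omega>)"
        unfolding F_def PP_def fst_conv snd_conv using trunc_prod[OF w N, of "\<lambda>n. \<phi> (real_of_ereal (T n \<omega>)) (Y n \<omega>)"] \<phi>b by simp
    qed
    have R: "RHSm N F = (\<integral>\<^sup>+\<omega>. ennreal ((if \<forall>k. T k \<omega> \<le> ereal t \<longrightarrow> k < N then 1 else 0) * PiG t g \<omega>) \<partial>M)"
      unfolding RHSm_def
    proof (intro nn_integral_cong)
      fix \<omega> assume w: "\<omega> \<in> space M"
      have int: "(\<integral>\<^sup>+y. F n (\<lambda>k. T k \<omega>, y) \<partial>K (real_of_ereal (T n \<omega>)))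
          = ennreal (if n = 0 then (if \<forall>k. T k \<omega> \<le> ereal t \<longrightarrow> k < N then 1 else 0) else 1) *
            ennreal (if T n \<omega> \<le> ereal t then g (real_of_ereal (T n \<omega>)) else 1)" for n
      proof -
        define s where "s = real_of_ereal (T n \<omega>)"
        have "(\<integral>\<^sup>+y. F n (\<lambda>k. T k \<omega>, y) \<partial>K s)
           = ennreal (if n = 0 then (if \<forall>k. T k \<omega> \<le> ereal t \<longrightarrow> k < N then 1 else 0) else 1) *
             (\<integral>\<^sup>+y. ennreal (if T n \<omega> \<le> ereal t then \<phi> s y else 1) \<partial>K s)"
          unfolding F_def fst_conv snd_conv s_def[symmetric] by (rule nn_integral_cmult) (use \<phi>y in measurable)
        also have "(\<integral>\<^sup>+y. ennreal (if T n \<omega> \<le> ereal t then \<phi> s y else 1) \<partial>K s)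
            = ennreal (if T n \<omega> \<le> ereal t then g s else 1)"
        proof (cases "T n \<omega> \<le> ereal t")
          case True then show ?thesis using gK by simp
        next
          case False then show ?thesis using prob_space.emeasure_space_1[OF prob_K[of s]] by simp
        qed
        finally show ?thesis unfolding s_def .
      qed
      show "(\<Prod>n<N. \<integral>\<^sup>+y. F n (\<lambda>k. T k \<omega>, y) \<partial>K (real_of_ereal (T n \<omega>))) =
          ennreal ((if \<forall>k. T k \<omega> \<le> ereal t \<longrightarrow> k < N then 1 else 0) * PiG t g \<omega>)"
        unfolding int PiG_def using trunc_prod[OF w N, of "\<lambda>n. g (real_of_ereal (T n \<omega>))"] gb by simp
    qed
    have e: "LHSm N F = RHSm N F" by (rule marked_prod) (rule ok)
    have m1: "(\<lambda>\<omega>. (if \<forall>k. T k \<omega> \<le> ereal t \<longrightarrow> k < N then 1 else 0) * PP \<omega>) \<in> borel_measurable M" by measurable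
    have m2: "(\<lambda>\<omega>. (if \<forall>k. T k \<omega> \<le> ereal t \<longrightarrow> k < N then 1 else 0) * PiG t g \<omega>) \<in> borel_measurable M" by measurable
    show ?thesis
      using e L R PPb PGb by (simp add: integral_eq_nn_integral[OF m1] integral_eq_nn_integral[OF m2])
  qed
  have lim1: "(\<lambda>m. \<integral>\<omega>. (if \<forall>k. T k \<omega> \<le> ereal t \<longrightarrow> k < Suc m then 1 else 0) * PP \<omega> \<partial>M) \<longlonglongrightarrow> (\<integral>\<omega>. PP \<omega> \<partial>M)"
    by (rule trunc_lim) (use PPb in auto)
  have lim2: "(\<lambda>m. \<integral>\<omega>. (if \<forall>k. T k \<omega> \<le> ereal t \<longrightarrow> k < Suc m then 1 else 0) * PP \<omega> \<partial>M) \<longlonglongrightarrow> (\<integral>\<omega>. PiG t g \<omega> \<partial>M)"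
    unfolding trunc[OF zero_less_Suc] by (rule trunc_lim) (use PGb in auto)
  have E: "(\<integral>\<omega>. PP \<omega> \<partial>M) = (\<integral>\<omega>. PiG t g \<omega> \<partial>M)" by (rule LIMSEQ_unique[OF lim1 lim2])
  have "(\<integral>\<omega>. exp (- \<alpha> * Wload T Y t \<omega> - \<beta> * real (Qnum T Y t \<omega>) - \<gamma> * real (Dnum T Y t \<omega>)) \<partial>M)
      = (\<integral>\<omega>. PP \<omega> \<partial>M)"
    by (intro Bochner_Integration.integral_cong refl) (simp only: step1_lhs PP_def \<phi>_def)
  also have "\<dots> = exp (- (LINT s:{0..t}|lborel. (1 - g s) * lam s))"
    using E good unfolding Hgood_def by simp
  also have "(LINT s:{0..t}|lborel. (1 - g s) * lam s) = (LINT s:{0..t}|lborel. (\<integral>y. 1 - exp (- Hf t \<alpha> \<beta> \<gamma> s y) \<partial>K s) * lam s)"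
  proof -
    have "(\<integral>y. 1 - exp (- Hf t \<alpha> \<beta> \<gamma> s y) \<partial>K s) = 1 - g s" for s
    proof -
      interpret P: prob_space "K s" by (rule prob_K)
      have "(\<integral>y. 1 - \<phi> s y \<partial>K s) = (\<integral>y. 1 \<partial>K s) - (\<integral>y. \<phi> s y \<partial>K s)"
        by (rule Bochner_Integration.integral_diff) (auto intro: \<phi>int)
      then show ?thesis unfolding g_def \<phi>_def using P.prob_space by simp
    qed
    then show ?thesis by simp
  qed
  finally show ?thesis .
qed

end

theorem theorem5:
  fixes M :: "'w measure" and lam :: "real \<Rightarrow> real"
    and K :: "real \<Rightarrow> (nat \<times> (nat \<Rightarrow> real)) measure"
    and T :: "nat \<Rightarrow> 'w \<Rightarrow> ereal" and Y :: "nat \<Rightarrow> 'w \<Rightarrow> nat \<times> (nat \<Rightarrow> real)"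
    and t \<alpha> \<beta> \<gamma> :: real
  assumes "prob_space M" and "nhpp M lam T" and "batch_kernel K" and "marked_by M K T Y"
    and "0 \<le> t" and "0 \<le> \<alpha>" and "0 \<le> \<beta>" and "0 \<le> \<gamma>"
  shows "(\<integral>\<omega>. exp (- \<alpha> * Wload T Y t \<omega> - \<beta> * real (Qnum T Y t \<omega>) - \<gamma> * real (Dnum T Y t \<omega>)) \<partial>M)
       = exp (- (LINT s:{0..t}|lborel.
            (\<integral>y. 1 - exp (- (\<Sum>j<fst y.
                  \<beta> * (if snd y j > t - s then 1 else 0)
                + \<gamma> * (if snd y j \<le> t - s then 1 else 0)
                + \<alpha> * max 0 (snd y j - (t - s)))) \<partial>K s) * lam s))"
proof -
  have Tm: "\<And>n. T n \<in> borel_measurable M" using assms(2) unfolding nhpp_def by auto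
  interpret nctx M lam T by (rule nctx.intro[OF assms(1)]) (unfold nctx_axioms_def, rule assms(2))
  interpret mk M K T Y by (rule mk.intro[OF assms(1)]) (unfold mk_axioms_def, use assms(3,4) Tm in auto)
  interpret full M lam K T Y by intro_locales
  show ?thesis using main[OF assms(5-8)] unfolding Hf_def .
qed

end
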